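(* Assume the Friedrichs inequality $\|w\|\le C_F\|\nabla w\|$ holds for all $w\in H^1_0$. Let $(u,p)\in H^1_0\times D$ satisfy $p=A\nabla u$ and $-\operatorname{div} p = f$ a.e. in $\Omega$, and let $(\tilde u,\tilde p)\in H^1_0\times D$ be arbitrary. Then $$\tfrac12\|\tilde p - A\nabla\tilde u\|_{A^{-1}}^2 + \|f + \operatorname{div}\tilde p\|^2 \le \|\nabla(u-\tilde u)\|_A^2 + \|p-\tilde p\|_{A^{-1}}^2 + \|\operatorname{div}(p-\tilde p)\|^2 \le 2\|\tilde p - A\nabla\tilde u\|_{A^{-1}}^2 + \Big(1+\tfrac{4C_F^2}{\alpha}\Big)\|f+\operatorname{div}\tilde p\|^2 .$$
   Context: $\Omega \subset \mathbb R^d$ ($d\ge1$) is an open domain. All function spaces are over $\mathbb C$. $L^2 = L^2(\Omega)$ (scalar or vector valued) has inner product $(x,y) = \int_\Omega x\cdot\bar y$ and norm $\|\cdot\|$. For a Hermitian-matrix valued weight $\gamma \ge 0$ in $L^\infty$, $\|v\|_\gamma^2 := (\gamma v, v)$. $H^1 = \{\varphi\in L^2 : \nabla\varphi\in L^2\}$, $D = \{\psi \in L^2(\Omega;\mathbb C^d) : \operatorname{div}\psi \in L^2\}$, and $H^1_0$ is the closure of $C_c^\infty(\Omega)$ in $H^1$. $A \in L^\infty(\Omega;\mathbb C^{d\times d})$ is pointwise Hermitian and satisfies $\alpha\|\varphi\|^2 \le (A\varphi,\varphi) \le \beta\|\varphi\|^2$ for all $\varphi\in L^2(\Omega;\mathbb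 C^d)$ with constants $0<\alpha\le\beta$; $f\in L^2$. *)

theory Defs
  imports "HOL-Analysis.Analysis"
begin

coinductive smooth_fn :: "('a::euclidean_space \<Rightarrow> 'b::real_normed_vector) \<Rightarrow> bool" where
  "(\<forall>x. f differentiable (at x)) \<Longrightarrow> (\<forall>v. smooth_fn (\<lambda>x. frechet_derivative f (at x) v))
    \<Longrightarrow> smooth_fn f"

definition test_fn :: "(real^'d) set \<Rightarrow> (real^'d \<Rightarrow> complex) \<Rightarrow> bool" where
  "test_fn \<Omega> \<phi> \<longleftrightarrow> smooth_fn \<phi> \<and> compact (closure {x. \<phi> x \<noteq> 0})
      \<and> closure {x. \<phi> x \<noteq> 0} \<subseteq> \<Omega>"

definition pderiv_fn :: "'d::finite \<Rightarrow> (real^'d \<Rightarrow> complex) \<Rightarrow> real^'d \<Rightarrow> complex" where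
  "pderiv_fn i \<phi> x = frechet_derivative \<phi> (at x) (axis i 1)"

definition cgrad :: "(real^'d \<Rightarrow> complex) \<Rightarrow> real^'d \<Rightarrow> complex^'d" where
  "cgrad \<phi> x = (\<chi> i. pderiv_fn i \<phi> x)"

definition L2 :: "(real^'d) set \<Rightarrow> (real^'d \<Rightarrow> 'b::real_normed_vector) \<Rightarrow> bool" where
  "L2 \<Omega> u \<longleftrightarrow> u \<in> borel_measurable (lebesgue_on \<Omega>)
     \<and> integrable (lebesgue_on \<Omega>) (\<lambda>x. (norm (u x))\<^sup>2)"

definition L2norm :: "(real^'d) set \<Rightarrow> (real^'d \<Rightarrow> 'b::real_normed_vector) \<Rightarrow> real" where
  "L2norm \<Omega> u = sqrt (LINT x|lebesgue_on \<Omega>. (norm (u x))\<^sup>2)"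

definition cinner :: "complex^'d \<Rightarrow> complex^'d \<Rightarrow> complex" where
  "cinner v w = (\<Sum>i\<in>UNIV. v $ i * cnj (w $ i))"

definition L2inner :: "(real^'d) set \<Rightarrow> (real^'d \<Rightarrow> complex^'d) \<Rightarrow> (real^'d \<Rightarrow> complex^'d) \<Rightarrow> complex" where
  "L2inner \<Omega> v w = (LINT x|lebesgue_on \<Omega>. cinner (v x) (w x))"

definition wnorm2 :: "(real^'d) set \<Rightarrow> (real^'d \<Rightarrow> complex^'d^'d) \<Rightarrow> (real^'d \<Rightarrow> complex^'d) \<Rightarrow> real" where
  "wnorm2 \<Omega> \<gamma> v = Re (L2inner \<Omega> (\<lambda>x. \<gamma> x *v v x) v)"

definition is_wgrad :: "(real^'d) set \<Rightarrow> (real^'d \<Rightarrow> complex) \<Rightarrow> (real^'d \<Rightarrow> complex^'d) \<Rightarrow> bool" where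
  "is_wgrad \<Omega> u g \<longleftrightarrow> (\<forall>\<phi>. test_fn \<Omega> \<phi> \<longrightarrow> (\<forall>i.
      (LINT x|lebesgue_on \<Omega>. u x * pderiv_fn i \<phi> x) = - (LINT x|lebesgue_on \<Omega>. g x $ i * \<phi> x)))"

definition is_wdiv :: "(real^'d) set \<Rightarrow> (real^'d \<Rightarrow> complex^'d) \<Rightarrow> (real^'d \<Rightarrow> complex) \<Rightarrow> bool" where
  "is_wdiv \<Omega> p q \<longleftrightarrow> (\<forall>\<phi>. test_fn \<Omega> \<phi> \<longrightarrow>
      (LINT x|lebesgue_on \<Omega>. (\<Sum>i\<in>UNIV. p x $ i * pderiv_fn i \<phi> x))
        = - (LINT x|lebesgue_on \<Omega>. q x * \<phi> x))"

definition H10 :: "(real^'d) set \<Rightarrow> (real^'d \<Rightarrow> complex) \<Rightarrow> (real^'d \<Rightarrow> complex^'d) \<Rightarrow> bool" where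
  "H10 \<Omega> u g \<longleftrightarrow> L2 \<Omega> u \<and> L2 \<Omega> g \<and> is_wgrad \<Omega> u g \<and>
     (\<exists>\<phi>. (\<forall>n. test_fn \<Omega> (\<phi> n))
        \<and> (\<lambda>n. L2norm \<Omega> (\<lambda>x. \<phi> n x - u x)) \<longlonglongrightarrow> 0
        \<and> (\<lambda>n. L2norm \<Omega> (\<lambda>x. cgrad (\<phi> n) x - g x)) \<longlonglongrightarrow> 0)"

definition Hdiv :: "(real^'d) set \<Rightarrow> (real^'d \<Rightarrow> complex^'d) \<Rightarrow> (real^'d \<Rightarrow> complex) \<Rightarrow> bool" where
  "Hdiv \<Omega> p q \<longleftrightarrow> L2 \<Omega> p \<and> L2 \<Omega> q \<and> is_wdiv \<Omega> p q"

end

theory Submission imports Defs begin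

lemma meas_nth[measurable (raw)]:
  "f \<in> borel_measurable M \<Longrightarrow> (\<lambda>x. (f x :: 'a::euclidean_space^'n) $ i) \<in> borel_measurable M"
  by (rule measurable_compose[of f M borel], assumption, rule borel_measurable_continuous_onI, intro continuous_intros)

lemma meas_vec:
  fixes f :: "_ \<Rightarrow> 'a::euclidean_space^'n"
  assumes "\<And>i. (\<lambda>x. f x $ i) \<in> borel_measurable M"
  shows "f \<in> borel_measurable M"
  unfolding borel_measurable_euclidean_space[where 'c="'a^'n"]
  using assms by (auto simp: Basis_vec_def inner_axis)

lemma meas_cnj[measurable (raw)]:
  "f \<in> borel_measurable M \<Longrightarrow> (\<lambda>x. cnj (f x :: complex)) \<in> borel_measurable M"
  by (rule measurable_compose[of f M borel], assumption, rule borel_measurable_continuous_onI, intro continuous_intros)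

lemma meas_cinner[measurable (raw)]:
  "f \<in> borel_measurable M \<Longrightarrow> g \<in> borel_measurable M \<Longrightarrow> (\<lambda>x. cinner (f x) (g x)) \<in> borel_measurable M"
  unfolding cinner_def by (intro borel_measurable_sum borel_measurable_times meas_cnj meas_nth)

lemma meas_mv[measurable (raw)]:
  fixes A :: "_ \<Rightarrow> complex^'n^'m"
  shows "A \<in> borel_measurable M \<Longrightarrow> g \<in> borel_measurable M \<Longrightarrow> (\<lambda>x. A x *v g x) \<in> borel_measurable M"
  apply (rule meas_vec) unfolding matrix_vector_mult_def by simp

lemma norm_vec_sq: "(norm (v::'a::real_normed_vector^'n))\<^sup>2 = (\<Sum>i\<in>UNIV. (norm (v$i))\<^sup>2)"
  unfolding norm_vec_def L2_set_def by (simp add: sum_nonneg)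

lemma cinner_self: "cinner v v = of_real ((norm v)\<^sup>2)"
  unfolding cinner_def norm_vec_sq by (simp add: complex_norm_square[symmetric])

lemma young_c: "(t::real) > 0 \<Longrightarrow> norm (a * cnj (b::complex)) \<le> (t * (norm a)\<^sup>2 + (norm b)\<^sup>2 / t) / 2"
proof -
  assume t: "t > 0"
  have "0 \<le> (sqrt t * norm a - norm b / sqrt t)\<^sup>2" by simp
  also have "\<dots> = t * (norm a)\<^sup>2 + (norm b)\<^sup>2 / t - 2 * norm a * norm b"
    using t by (simp add: power2_diff power_divide field_simps)
  finally show ?thesis by (simp add: norm_mult)
qed

lemma young_cinner: "(t::real) > 0 \<Longrightarrow> norm (cinner v w) \<le> (t * (norm v)\<^sup>2 + (norm w)\<^sup>2 / t) / 2"
proof -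
  assume t: "t > 0"
  have "norm (cinner v w) \<le> (\<Sum>i\<in>UNIV. norm (v$i * cnj (w$i)))"
    unfolding cinner_def by (rule norm_sum)
  also have "\<dots> \<le> (\<Sum>i\<in>UNIV. (t * (norm (v$i))\<^sup>2 + (norm (w$i))\<^sup>2 / t) / 2)"
    by (rule sum_mono, rule young_c[OF t])
  also have "\<dots> = (t * (norm v)\<^sup>2 + (norm w)\<^sup>2 / t) / 2"
    unfolding norm_vec_sq by (simp add: sum_divide_distrib sum_distrib_left sum.distrib add_divide_distrib)
  finally show ?thesis .
qed

lemma sq_diff_le: "(norm (a - b :: 'a::real_normed_vector))\<^sup>2 \<le> 2 * (norm a)\<^sup>2 + 2 * (norm b)\<^sup>2"
proof -
  have "norm (a - b) \<le> norm a + norm b" by (rule norm_triangle_ineq4)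
  hence "(norm (a - b))\<^sup>2 \<le> (norm a + norm b)\<^sup>2" by (simp add: power_mono)
  also have "\<dots> \<le> 2 * (norm a)\<^sup>2 + 2 * (norm b)\<^sup>2"
  proof -
    have "0 \<le> (norm a - norm b)\<^sup>2" by simp
    thus ?thesis unfolding power2_diff power2_sum by linarith
  qed
  finally show ?thesis .
qed

lemma sq_add_le: "(norm (a + b :: 'a::real_normed_vector))\<^sup>2 \<le> 2 * (norm a)\<^sup>2 + 2 * (norm b)\<^sup>2"
  using sq_diff_le[of a "-b"] by simp

lemma young_real: "(t::real) > 0 \<Longrightarrow> x * y \<le> (t * x\<^sup>2 + y\<^sup>2 / t) / 2"
proof -
  assume t: "t > 0"
  have "0 \<le> (sqrt t * x - y / sqrt t)\<^sup>2" by simp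
  also have "\<dots> = t * x\<^sup>2 + y\<^sup>2 / t - 2 * x * y"
    using t by (simp add: power2_diff power_divide field_simps power2_eq_square)
  finally show ?thesis by simp
qed

lemma half_lt: "(y::real) < X \<Longrightarrow> 0 \<le> y \<Longrightarrow> y / 2 < X" by linarith

lemma ab_lemma:
  fixes a b X :: real
  assumes a: "a \<ge> 0" and b: "b \<ge> 0" and H: "\<And>t. t > 0 \<Longrightarrow> X \<le> (t * a\<^sup>2 + b\<^sup>2 / t) / 2"
  shows "X \<le> a * b"
proof (cases "a = 0 \<or> b = 0")
  case True
  show ?thesis
  proof (rule ccontr)
    assume "\<not> X \<le> a * b"
    hence X: "X > 0" using True by auto
    show False
    proof (cases "a = 0")
      case True
      have tp: "(b\<^sup>2 + 1) / X > 0" using X zero_le_power2[of b] by (intro divide_pos_pos) linarith+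
      have "X \<le> (b\<^sup>2 / ((b\<^sup>2 + 1) / X)) / 2" using H[OF tp] True by simp
      also have "\<dots> = X * b\<^sup>2 / (b\<^sup>2 + 1) / 2" using X by (simp add: field_simps)
      also have "\<dots> < X"
      proof -
        have "b\<^sup>2 / (b\<^sup>2 + 1) < 1" by (subst divide_less_eq_1_pos) (use zero_le_power2[of b] in linarith)+
        hence "X * (b\<^sup>2 / (b\<^sup>2 + 1)) < X * 1" using X by (intro mult_strict_left_mono) auto
        hence "X * (b\<^sup>2 / (b\<^sup>2 + 1)) < X" by simp
        moreover have "0 \<le> X * (b\<^sup>2 / (b\<^sup>2 + 1))" using X by simp
        ultimately have "X * (b\<^sup>2 / (b\<^sup>2 + 1)) / 2 < X"
          by (rule half_lt)
        thus ?thesis by simp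
      qed
      finally show False by simp
    next
      case False
      hence b0: "b = 0" using True by auto
      have tp: "X / (a\<^sup>2 + 1) > 0" using X zero_le_power2[of a] by (intro divide_pos_pos) linarith+
      have "X \<le> (X / (a\<^sup>2 + 1) * a\<^sup>2) / 2" using H[OF tp] b0 by simp
      also have "\<dots> = X * (a\<^sup>2 / (a\<^sup>2 + 1)) / 2" by simp
      also have "\<dots> < X"
      proof -
        have "a\<^sup>2 / (a\<^sup>2 + 1) < 1" by (subst divide_less_eq_1_pos) (use zero_le_power2[of a] in linarith)+
        hence "X * (a\<^sup>2 / (a\<^sup>2 + 1)) < X * 1" using X by (intro mult_strict_left_mono) auto
        hence "X * (a\<^sup>2 / (a\<^sup>2 + 1)) < X" by simp
        moreover have "0 \<le> X * (a\<^sup>2 / (a\<^sup>2 + 1))" using X by simp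
        ultimately show ?thesis by (rule half_lt)
      qed
      finally show False by simp
    qed
  qed
next
  case False
  hence ab: "a > 0" "b > 0" using a b by auto
  have "X \<le> ((b / a) * a\<^sup>2 + b\<^sup>2 / (b / a)) / 2" using H[of "b / a"] ab by simp
  also have "\<dots> = a * b" using ab by (simp add: field_simps power2_eq_square)
  finally show ?thesis .
qed

lemma L2norm_nonneg: "L2norm \<Omega> f \<ge> 0"
  unfolding L2norm_def by simp

lemma L2norm_sq: "(L2norm \<Omega> f)\<^sup>2 = (LINT x|lebesgue_on \<Omega>. (norm (f x))\<^sup>2)"
  unfolding L2norm_def by (simp add: integral_nonneg_AE)

lemma L2_diff:
  fixes f g :: "_ \<Rightarrow> 'b::{real_normed_vector, second_countable_topology}"
  assumes "L2 \<Omega> f" "L2 \<Omega> g"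
  shows "L2 \<Omega> (\<lambda>x. f x - g x)"
  unfolding L2_def
proof
  show m: "(\<lambda>x. f x - g x) \<in> borel_measurable (lebesgue_on \<Omega>)" using assms unfolding L2_def by (intro borel_measurable_diff) auto
  show "integrable (lebesgue_on \<Omega>) (\<lambda>x. (norm (f x - g x))\<^sup>2)"
    by (rule Bochner_Integration.integrable_bound[where f="\<lambda>x. 2 * (norm (f x))\<^sup>2 + 2 * (norm (g x))\<^sup>2"])
       (use assms m sq_diff_le in \<open>auto simp: L2_def\<close>)
qed

lemma L2_add:
  fixes f g :: "_ \<Rightarrow> 'b::{real_normed_vector, second_countable_topology}"
  assumes "L2 \<Omega> f" "L2 \<Omega> g"
  shows "L2 \<Omega> (\<lambda>x. f x + g x)"
  unfolding L2_def
proof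
  show m: "(\<lambda>x. f x + g x) \<in> borel_measurable (lebesgue_on \<Omega>)" using assms unfolding L2_def by (intro borel_measurable_add) auto
  show "integrable (lebesgue_on \<Omega>) (\<lambda>x. (norm (f x + g x))\<^sup>2)"
    by (rule Bochner_Integration.integrable_bound[where f="\<lambda>x. 2 * (norm (f x))\<^sup>2 + 2 * (norm (g x))\<^sup>2"])
       (use assms m sq_add_le in \<open>auto simp: L2_def\<close>)
qed

lemma L2_cnj: "L2 \<Omega> f \<Longrightarrow> L2 \<Omega> (\<lambda>x. cnj (f x))"
  unfolding L2_def by (auto intro: meas_cnj)

lemma L2_nth:
  fixes f :: "_ \<Rightarrow> 'b::euclidean_space^'n"
  assumes "L2 \<Omega> f" shows "L2 \<Omega> (\<lambda>x. f x $ i)"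
  unfolding L2_def
proof
  show m: "(\<lambda>x. f x $ i) \<in> borel_measurable (lebesgue_on \<Omega>)" using assms unfolding L2_def by (simp add: meas_nth)
  show "integrable (lebesgue_on \<Omega>) (\<lambda>x. (norm (f x $ i))\<^sup>2)"
    by (rule Bochner_Integration.integrable_bound[where f="\<lambda>x. (norm (f x))\<^sup>2"])
       (use assms m in \<open>auto simp: L2_def norm_nth_le intro!: power_mono AE_I2 Finite_Cartesian_Product.norm_nth_le\<close>)
qed

lemma int_cinner:
  assumes "L2 \<Omega> f" "L2 \<Omega> g"
  shows "integrable (lebesgue_on \<Omega>) (\<lambda>x. cinner (f x) (g x))"
  by (rule Bochner_Integration.integrable_bound[where f="\<lambda>x. ((norm (f x))\<^sup>2 + (norm (g x))\<^sup>2) / 2"])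
     (use assms young_cinner[of 1] in \<open>auto simp: L2_def intro!: meas_cinner\<close>)

lemma int_mult_cnj:
  assumes "L2 \<Omega> f" "L2 \<Omega> (g :: _ \<Rightarrow> complex)"
  shows "integrable (lebesgue_on \<Omega>) (\<lambda>x. f x * cnj (g x))"
  by (rule Bochner_Integration.integrable_bound[where f="\<lambda>x. ((norm (f x))\<^sup>2 + (norm (g x))\<^sup>2) / 2"])
     (use assms young_c[of 1] in \<open>auto simp: L2_def intro!: meas_cnj\<close>)

lemma int_mult:
  assumes "L2 \<Omega> f" "L2 \<Omega> (g :: _ \<Rightarrow> complex)"
  shows "integrable (lebesgue_on \<Omega>) (\<lambda>x. f x * g x)"
  using int_mult_cnj[OF assms(1) L2_cnj[OF assms(2)]] by simp

lemma CS_cinner: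
  assumes f: "L2 \<Omega> f" and g: "L2 \<Omega> g"
  shows "norm (LINT x|lebesgue_on \<Omega>. cinner (f x) (g x)) \<le> L2norm \<Omega> f * L2norm \<Omega> g"
proof (rule ab_lemma[OF L2norm_nonneg L2norm_nonneg])
  fix t :: real assume t: "t > 0"
  have "norm (LINT x|lebesgue_on \<Omega>. cinner (f x) (g x)) \<le> (LINT x|lebesgue_on \<Omega>. norm (cinner (f x) (g x)))"
    by (rule integral_norm_bound)
  also have "\<dots> \<le> (LINT x|lebesgue_on \<Omega>. (t * (norm (f x))\<^sup>2 + (norm (g x))\<^sup>2 / t) / 2)"
    by (rule integral_mono[OF integrable_norm[OF int_cinner[OF f g]] _ young_cinner[OF t]]) (use f g in \<open>auto simp: L2_def\<close>)
  also have "\<dots> = (t * (L2norm \<Omega> f)\<^sup>2 + (L2norm \<Omega> g)\<^sup>2 / t) / 2"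
    using f g unfolding L2norm_sq L2_def by simp
  finally show "norm (LINT x|lebesgue_on \<Omega>. cinner (f x) (g x)) \<le> (t * (L2norm \<Omega> f)\<^sup>2 + (L2norm \<Omega> g)\<^sup>2 / t) / 2" .
qed

lemma CS_mult:
  assumes f: "L2 \<Omega> f" and g: "L2 \<Omega> (g :: _ \<Rightarrow> complex)"
  shows "norm (LINT x|lebesgue_on \<Omega>. f x * cnj (g x)) \<le> L2norm \<Omega> f * L2norm \<Omega> g"
proof (rule ab_lemma[OF L2norm_nonneg L2norm_nonneg])
  fix t :: real assume t: "t > 0"
  have "norm (LINT x|lebesgue_on \<Omega>. f x * cnj (g x)) \<le> (LINT x|lebesgue_on \<Omega>. norm (f x * cnj (g x)))"
    by (rule integral_norm_bound)
  also have "\<dots> \<le> (LINT x|lebesgue_on \<Omega>. (t * (norm (f x))\<^sup>2 + (norm (g x))\<^sup>2 / t) / 2)"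
    by (rule integral_mono[OF integrable_norm[OF int_mult_cnj[OF f g]] _ young_c[OF t]]) (use f g in \<open>auto simp: L2_def\<close>)
  also have "\<dots> = (t * (L2norm \<Omega> f)\<^sup>2 + (L2norm \<Omega> g)\<^sup>2 / t) / 2"
    using f g unfolding L2norm_sq L2_def by simp
  finally show "norm (LINT x|lebesgue_on \<Omega>. f x * cnj (g x)) \<le> (t * (L2norm \<Omega> f)\<^sup>2 + (L2norm \<Omega> g)\<^sup>2 / t) / 2" .
qed

section \<open>Test functions\<close>

lemma smooth_D: "smooth_fn f \<Longrightarrow> (\<forall>x. f differentiable at x) \<and> (\<forall>v. smooth_fn (\<lambda>x. frechet_derivative f (at x) v))"
  by (erule smooth_fn.cases) simp

lemma smooth_diff:
  assumes "smooth_fn f" "smooth_fn g"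
  shows "smooth_fn (\<lambda>x. f x - g x :: 'b::real_normed_vector)"
proof -
  show ?thesis
  proof (rule smooth_fn.coinduct[where X = "\<lambda>h. \<exists>f g. smooth_fn f \<and> smooth_fn g \<and> h = (\<lambda>x. f x - g x)"])
    show "\<exists>f' g'. smooth_fn f' \<and> smooth_fn g' \<and> (\<lambda>x. f x - g x) = (\<lambda>x. f' x - g' x)" using assms by blast
  next
    fix h :: "'a \<Rightarrow> 'b"
    assume "\<exists>f g. smooth_fn f \<and> smooth_fn g \<and> h = (\<lambda>x. f x - g x)"
    then obtain f g where f: "smooth_fn f" and g: "smooth_fn g" and h: "h = (\<lambda>x. f x - g x :: 'b)" by blast
    have fd: "\<forall>x. f differentiable at x" and fs: "\<forall>v. smooth_fn (\<lambda>x. frechet_derivative f (at x) v)"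
      using smooth_D[OF f] by auto
    have gd: "\<forall>x. g differentiable at x" and gs: "\<forall>v. smooth_fn (\<lambda>x. frechet_derivative g (at x) v)"
      using smooth_D[OF g] by auto
    have der: "frechet_derivative h (at x) = (\<lambda>v. frechet_derivative f (at x) v - frechet_derivative g (at x) v)" for x
    proof -
      have "(h has_derivative (\<lambda>v. frechet_derivative f (at x) v - frechet_derivative g (at x) v)) (at x)"
        unfolding h using fd gd by (intro has_derivative_diff) (auto simp: frechet_derivative_works[symmetric])
      thus ?thesis by (rule frechet_derivative_at[symmetric])
    qed
    show "\<exists>f. h = f \<and> (\<forall>x. f differentiable at x) \<and> (\<forall>v. (\<exists>f' g. smooth_fn f' \<and> smooth_fn g \<and> (\<lambda>x. frechet_derivative f (at x) v) = (\<lambda>x. f' x - g x)) \<or> smooth_fn (\<lambda>x. frechet_derivative f (at x) v))"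
    proof (intro exI conjI allI)
      show "h = h" ..
      fix x show "h differentiable at x" unfolding h using fd gd by (auto intro: differentiable_diff)
    next
      fix v
      show "(\<exists>f g. smooth_fn f \<and> smooth_fn g \<and> (\<lambda>x. frechet_derivative h (at x) v) = (\<lambda>x. f x - g x)) \<or>
          smooth_fn (\<lambda>x. frechet_derivative h (at x) v)"
      proof -
        have "(\<lambda>x. frechet_derivative h (at x) v) = (\<lambda>x. frechet_derivative f (at x) v - frechet_derivative g (at x) v)"
          by (simp add: der)
        thus ?thesis using fs gs by blast
      qed
    qed
  qed
qed

lemma smooth_cnj:
  assumes "smooth_fn f"
  shows "smooth_fn (\<lambda>x. cnj (f x))"
proof -
  show ?thesis
  proof (rule smooth_fn.coinduct[where X = "\<lambda>h. \<exists>f. smooth_fn f \<and> h = (\<lambda>x. cnj (f x))"])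
    show "\<exists>f'. smooth_fn f' \<and> (\<lambda>x. cnj (f x)) = (\<lambda>x. cnj (f' x))" using assms by blast
  next
    fix h :: "'a \<Rightarrow> complex"
    assume "\<exists>f. smooth_fn f \<and> h = (\<lambda>x. cnj (f x))"
    then obtain f where f: "smooth_fn f" and h: "h = (\<lambda>x. cnj (f x))" by blast
    have fd: "\<forall>x. f differentiable at x" and fs: "\<forall>v. smooth_fn (\<lambda>x. frechet_derivative f (at x) v)"
      using smooth_D[OF f] by auto
    have hd: "(h has_derivative (\<lambda>v. cnj (frechet_derivative f (at x) v))) (at x)" for x
      unfolding h using fd by (intro bounded_linear.has_derivative[OF bounded_linear_cnj])
        (auto simp: frechet_derivative_works[symmetric])
    have der: "frechet_derivative h (at x) = (\<lambda>v. cnj (frechet_derivative f (at x) v))" for x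
      using hd by (rule frechet_derivative_at[symmetric])
    show "\<exists>f. h = f \<and> (\<forall>x. f differentiable at x) \<and> (\<forall>v. (\<exists>f'. smooth_fn f' \<and> (\<lambda>x. frechet_derivative f (at x) v) = (\<lambda>x. cnj (f' x))) \<or> smooth_fn (\<lambda>x. frechet_derivative f (at x) v))"
    proof (intro exI conjI allI)
      show "h = h" ..
      fix x show "h differentiable at x" using hd differentiable_def by blast
    next
      fix v
      show "(\<exists>f. smooth_fn f \<and> (\<lambda>x. frechet_derivative h (at x) v) = (\<lambda>x. cnj (f x))) \<or>
          smooth_fn (\<lambda>x. frechet_derivative h (at x) v)"
      proof -
        have "(\<lambda>x. frechet_derivative h (at x) v) = (\<lambda>x. cnj (frechet_derivative f (at x) v))"
          by (simp add: der)
        thus ?thesis using fs by blast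
      qed
    qed
  qed
qed

lemma smooth_diffble: "smooth_fn f \<Longrightarrow> f differentiable at x"
  using smooth_D by blast

lemma pderiv_diff:
  assumes "smooth_fn \<phi>" "smooth_fn \<psi>"
  shows "pderiv_fn i (\<lambda>x. \<phi> x - \<psi> x) x = pderiv_fn i \<phi> x - pderiv_fn i \<psi> x"
proof -
  have "((\<lambda>x. \<phi> x - \<psi> x) has_derivative (\<lambda>v. frechet_derivative \<phi> (at x) v - frechet_derivative \<psi> (at x) v)) (at x)"
    using smooth_diffble[OF assms(1)] smooth_diffble[OF assms(2)]
    by (intro has_derivative_diff) (auto simp: frechet_derivative_works[symmetric])
  from fun_cong[OF frechet_derivative_at[OF this], of "axis i 1"] show ?thesis unfolding pderiv_fn_def by simp
qed

lemma pderiv_cnj: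
  assumes "smooth_fn \<phi>"
  shows "pderiv_fn i (\<lambda>x. cnj (\<phi> x)) x = cnj (pderiv_fn i \<phi> x)"
proof -
  have "((\<lambda>x. cnj (\<phi> x)) has_derivative (\<lambda>v. cnj (frechet_derivative \<phi> (at x) v))) (at x)"
    using smooth_diffble[OF assms(1)]
    by (intro bounded_linear.has_derivative[OF bounded_linear_cnj]) (auto simp: frechet_derivative_works[symmetric])
  from fun_cong[OF frechet_derivative_at[OF this], of "axis i 1"] show ?thesis unfolding pderiv_fn_def by simp
qed

lemma cgrad_diff:
  assumes "smooth_fn \<phi>" "smooth_fn \<psi>"
  shows "cgrad (\<lambda>x. \<phi> x - \<psi> x) x = cgrad \<phi> x - cgrad \<psi> x"
  unfolding cgrad_def using pderiv_diff[OF assms] by (simp add: vec_eq_iff)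

lemma test_smooth: "test_fn \<Omega> \<phi> \<Longrightarrow> smooth_fn \<phi>"
  unfolding test_fn_def by simp

lemma compact_closure_bounded: "compact (closure S) \<Longrightarrow> bounded (S :: 'a::euclidean_space set)"
  using compact_imp_bounded bounded_subset closure_subset by blast

lemma test_diff:
  assumes "test_fn \<Omega> \<phi>" "test_fn \<Omega> \<psi>"
  shows "test_fn \<Omega> (\<lambda>x. \<phi> x - \<psi> x)"
proof -
  have sub: "{x. \<phi> x - \<psi> x \<noteq> 0} \<subseteq> {x. \<phi> x \<noteq> 0} \<union> {x. \<psi> x \<noteq> 0}" by auto
  hence csub: "closure {x. \<phi> x - \<psi> x \<noteq> 0} \<subseteq> closure {x. \<phi> x \<noteq> 0} \<union> closure {x. \<psi> x \<noteq> 0}"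
    using closure_mono[OF sub] by simp
  have "bounded ({x. \<phi> x \<noteq> 0} \<union> {x. \<psi> x \<noteq> 0})"
    using assms unfolding test_fn_def by (intro bounded_Un[THEN iffD2] conjI compact_closure_bounded) auto
  hence "bounded {x. \<phi> x - \<psi> x \<noteq> 0}" using sub by (rule bounded_subset)
  hence "compact (closure {x. \<phi> x - \<psi> x \<noteq> 0})" by (simp add: compact_closure)
  moreover have "closure {x. \<phi> x - \<psi> x \<noteq> 0} \<subseteq> \<Omega>" using assms csub unfolding test_fn_def by blast
  moreover have "smooth_fn (\<lambda>x. \<phi> x - \<psi> x)" using assms unfolding test_fn_def by (intro smooth_diff) auto
  ultimately show ?thesis unfolding test_fn_def by blast
qed

lemma test_cnj:
  assumes "test_fn \<Omega> \<phi>"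
  shows "test_fn \<Omega> (\<lambda>x. cnj (\<phi> x))"
  using assms unfolding test_fn_def by (auto intro: smooth_cnj)

lemma smooth_pderiv: "smooth_fn \<phi> \<Longrightarrow> smooth_fn (pderiv_fn i \<phi>)"
proof -
  assume "smooth_fn \<phi>"
  hence "smooth_fn (\<lambda>x. frechet_derivative \<phi> (at x) (axis i 1))" using smooth_D by blast
  moreover have "pderiv_fn i \<phi> = (\<lambda>x. frechet_derivative \<phi> (at x) (axis i 1))"
    by (rule ext) (simp add: pderiv_fn_def)
  ultimately show ?thesis by simp
qed

lemma smooth_cont: "smooth_fn f \<Longrightarrow> continuous_on UNIV f"
  by (intro differentiable_imp_continuous_on differentiable_at_imp_differentiable_on) (auto intro: smooth_diffble)

lemma pderiv_out:
  assumes "test_fn \<Omega> \<phi>" "x \<notin> closure {x. \<phi> x \<noteq> 0}"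
  shows "pderiv_fn i \<phi> x = 0"
proof -
  define S where "S = - closure {x. \<phi> x \<noteq> 0}"
  have oS: "open S" unfolding S_def by (rule open_Compl[OF closed_closure])
  have xS: "x \<in> S" using assms(2) unfolding S_def by blast
  have sub: "{x. \<phi> x \<noteq> 0} \<subseteq> closure {x. \<phi> x \<noteq> 0}" by (rule closure_subset)
  have eq: "(\<lambda>_. 0) y = \<phi> y" if "y \<in> S" for y
  proof -
    have "y \<notin> closure {x. \<phi> x \<noteq> 0}" using that unfolding S_def by simp
    hence "y \<notin> {x. \<phi> x \<noteq> 0}" using sub by (rule contra_subsetD[rotated])
    thus ?thesis by simp
  qed
  have d0: "((\<lambda>_. 0::complex) has_derivative (\<lambda>_. 0)) (at x)" by (rule has_derivative_const)
  have "(\<phi> has_derivative (\<lambda>_. 0)) (at x)"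
    by (rule has_derivative_transform_within_open[OF d0 oS xS eq])
  from fun_cong[OF frechet_derivative_at[OF this], of "axis i 1"] show ?thesis unfolding pderiv_fn_def by simp
qed

lemma L2_compact_support:
  fixes h :: "real^'d \<Rightarrow> 'b::{real_normed_vector, second_countable_topology}"
  assumes cont: "continuous_on UNIV h" and K: "compact K" and out: "\<And>x. x \<notin> K \<Longrightarrow> h x = 0"
    and \<Omega>: "\<Omega> \<in> sets lebesgue"
  shows "L2 \<Omega> h"
  unfolding L2_def
proof
  show m: "h \<in> borel_measurable (lebesgue_on \<Omega>)"
    by (rule continuous_imp_measurable_on_sets_lebesgue[OF continuous_on_subset[OF cont subset_UNIV] \<Omega>])
  have "compact (h ` K)" by (rule compact_continuous_image[OF continuous_on_subset[OF cont subset_UNIV] K])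
  then obtain B where B: "\<And>x. x \<in> K \<Longrightarrow> norm (h x) \<le> B"
    using compact_imp_bounded[of "h ` K"] unfolding bounded_iff by auto
  have iK: "integrable lebesgue (indicat_real K)"
    using lmeasurable_compact[OF K] lmeasurable_iff_integrable by blast
  have "integrable lebesgue (\<lambda>x. indicat_real \<Omega> x *\<^sub>R (B\<^sup>2 * indicat_real K x))"
    using \<Omega> iK by (intro integrable_mult_indicator integrable_mult_right) auto
  hence iB: "integrable (lebesgue_on \<Omega>) (\<lambda>x. B\<^sup>2 * indicat_real K x)"
    using \<Omega> by (subst integrable_restrict_space) auto
  show "integrable (lebesgue_on \<Omega>) (\<lambda>x. (norm (h x))\<^sup>2)"
  proof (rule Bochner_Integration.integrable_bound[OF iB])
    show "(\<lambda>x. (norm (h x))\<^sup>2) \<in> borel_measurable (lebesgue_on \<Omega>)" using m by simp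
    show "AE x in lebesgue_on \<Omega>. norm ((norm (h x))\<^sup>2) \<le> norm (B\<^sup>2 * indicat_real K x)"
    proof (rule AE_I2)
      fix x show "norm ((norm (h x))\<^sup>2) \<le> norm (B\<^sup>2 * indicat_real K x)"
      proof (cases "x \<in> K")
        case True
        hence "norm (h x) \<le> B" by (rule B)
        hence "(norm (h x))\<^sup>2 \<le> B\<^sup>2" by (simp add: power_mono)
        thus ?thesis using True by simp
      next
        case False thus ?thesis using out by simp
      qed
    qed
  qed
qed

lemma test_L2:
  assumes "test_fn \<Omega> \<phi>" "\<Omega> \<in> sets lebesgue"
  shows "L2 \<Omega> \<phi>"
proof (rule L2_compact_support[where K = "closure {x. \<phi> x \<noteq> 0}"])
  show "continuous_on UNIV \<phi>" using assms test_smooth smooth_cont by blast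
  show "compact (closure {x. \<phi> x \<noteq> 0})" using assms unfolding test_fn_def by blast
  fix x assume "x \<notin> closure {x. \<phi> x \<noteq> 0}"
  hence "x \<notin> {x. \<phi> x \<noteq> 0}" using closure_subset by (rule contra_subsetD[rotated])
  thus "\<phi> x = 0" by simp
qed (use assms in auto)

lemma test_grad_L2:
  assumes "test_fn \<Omega> \<phi>" "\<Omega> \<in> sets lebesgue"
  shows "L2 \<Omega> (cgrad \<phi>)"
proof (rule L2_compact_support[where K = "closure {x. \<phi> x \<noteq> 0}"])
  have "continuous_on UNIV (\<lambda>x. \<chi> i. pderiv_fn i \<phi> x)"
    using assms by (intro continuous_on_vec_lambda smooth_cont smooth_pderiv test_smooth)
  thus "continuous_on UNIV (cgrad \<phi>)" unfolding cgrad_def[abs_def] .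
  show "compact (closure {x. \<phi> x \<noteq> 0})" using assms unfolding test_fn_def by blast
  fix x assume "x \<notin> closure {x. \<phi> x \<noteq> 0}"
  thus "cgrad \<phi> x = 0" using pderiv_out[OF assms(1)] unfolding cgrad_def by (simp add: vec_eq_iff)
qed (use assms in auto)

lemma test_pderiv_L2:
  assumes "test_fn \<Omega> \<phi>" "\<Omega> \<in> sets lebesgue"
  shows "L2 \<Omega> (pderiv_fn i \<phi>)"
proof -
  have "L2 \<Omega> (\<lambda>x. cgrad \<phi> x $ i)" by (rule L2_nth[OF test_grad_L2[OF assms]])
  thus ?thesis unfolding cgrad_def by simp
qed

lemma open_lebesgue: "open S \<Longrightarrow> S \<in> sets lebesgue"
  by (simp add: borel_open sets_completionI_sets)

section \<open>Sobolev algebra\<close>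

lemma L2norm_diff_sq_le:
  fixes a b :: "_ \<Rightarrow> 'b::{real_normed_vector, second_countable_topology}"
  assumes "L2 \<Omega> a" "L2 \<Omega> b"
  shows "(L2norm \<Omega> (\<lambda>x. a x - b x))\<^sup>2 \<le> 2 * (L2norm \<Omega> a)\<^sup>2 + 2 * (L2norm \<Omega> b)\<^sup>2"
proof -
  have "(L2norm \<Omega> (\<lambda>x. a x - b x))\<^sup>2 = (LINT x|lebesgue_on \<Omega>. (norm (a x - b x))\<^sup>2)" by (rule L2norm_sq)
  also have "\<dots> \<le> (LINT x|lebesgue_on \<Omega>. 2 * (norm (a x))\<^sup>2 + 2 * (norm (b x))\<^sup>2)"
    using L2_diff[OF assms] assms unfolding L2_def by (intro integral_mono sq_diff_le) auto
  also have "\<dots> = 2 * (L2norm \<Omega> a)\<^sup>2 + 2 * (L2norm \<Omega> b)\<^sup>2"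
    using assms unfolding L2norm_sq L2_def by simp
  finally show ?thesis .
qed

lemma L2_tendsto_diff:
  fixes a b :: "nat \<Rightarrow> _ \<Rightarrow> 'b::{real_normed_vector, second_countable_topology}"
  assumes A: "(\<lambda>n. L2norm \<Omega> (a n)) \<longlonglongrightarrow> 0" and B: "(\<lambda>n. L2norm \<Omega> (b n)) \<longlonglongrightarrow> 0"
    and L: "\<And>n. L2 \<Omega> (a n)" "\<And>n. L2 \<Omega> (b n)"
  shows "(\<lambda>n. L2norm \<Omega> (\<lambda>x. a n x - b n x)) \<longlonglongrightarrow> 0"
proof (rule tendsto_sandwich[where f = "\<lambda>_. 0" and h = "\<lambda>n. sqrt (2 * (L2norm \<Omega> (a n))\<^sup>2 + 2 * (L2norm \<Omega> (b n))\<^sup>2)"])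
  show "\<forall>\<^sub>F n in sequentially. 0 \<le> L2norm \<Omega> (\<lambda>x. a n x - b n x)" by (simp add: L2norm_nonneg)
  show "\<forall>\<^sub>F n in sequentially. L2norm \<Omega> (\<lambda>x. a n x - b n x) \<le> sqrt (2 * (L2norm \<Omega> (a n))\<^sup>2 + 2 * (L2norm \<Omega> (b n))\<^sup>2)"
    using L2norm_diff_sq_le[OF L(1) L(2)] by (intro always_eventually allI real_le_rsqrt) auto
  show "(\<lambda>_. 0) \<longlonglongrightarrow> (0::real)" by simp
  have "(\<lambda>n. sqrt (2 * (L2norm \<Omega> (a n))\<^sup>2 + 2 * (L2norm \<Omega> (b n))\<^sup>2)) \<longlonglongrightarrow> sqrt (2 * 0\<^sup>2 + 2 * 0\<^sup>2)"
    by (intro tendsto_intros A B)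
  thus "(\<lambda>n. sqrt (2 * (L2norm \<Omega> (a n))\<^sup>2 + 2 * (L2norm \<Omega> (b n))\<^sup>2)) \<longlonglongrightarrow> 0" by simp
qed

lemma H10_diff:
  assumes \<Omega>: "\<Omega> \<in> sets lebesgue" and u: "H10 \<Omega> u g" and v: "H10 \<Omega> v h"
  shows "H10 \<Omega> (\<lambda>x. u x - v x) (\<lambda>x. g x - h x)"
proof -
  from u have uL: "L2 \<Omega> u" and gL: "L2 \<Omega> g" and ug: "is_wgrad \<Omega> u g" unfolding H10_def by auto
  from v have vL: "L2 \<Omega> v" and hL: "L2 \<Omega> h" and vh: "is_wgrad \<Omega> v h" unfolding H10_def by auto
  from u obtain \<phi> where \<phi>: "\<And>n. test_fn \<Omega> (\<phi> n)" "(\<lambda>n. L2norm \<Omega> (\<lambda>x. \<phi> n x - u x)) \<longlonglongrightarrow> 0"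
    "(\<lambda>n. L2norm \<Omega> (\<lambda>x. cgrad (\<phi> n) x - g x)) \<longlonglongrightarrow> 0" unfolding H10_def by blast
  from v obtain \<psi> where \<psi>: "\<And>n. test_fn \<Omega> (\<psi> n)" "(\<lambda>n. L2norm \<Omega> (\<lambda>x. \<psi> n x - v x)) \<longlonglongrightarrow> 0"
    "(\<lambda>n. L2norm \<Omega> (\<lambda>x. cgrad (\<psi> n) x - h x)) \<longlonglongrightarrow> 0" unfolding H10_def by blast
  have wg: "is_wgrad \<Omega> (\<lambda>x. u x - v x) (\<lambda>x. g x - h x)"
    unfolding is_wgrad_def
  proof (intro allI impI)
    fix \<zeta> :: "real^'a \<Rightarrow> complex" and i
    assume \<zeta>: "test_fn \<Omega> \<zeta>"
    have pL: "L2 \<Omega> (pderiv_fn i \<zeta>)" by (rule test_pderiv_L2[OF \<zeta> \<Omega>])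
    have cL: "L2 \<Omega> \<zeta>" by (rule test_L2[OF \<zeta> \<Omega>])
    have "(LINT x|lebesgue_on \<Omega>. (u x - v x) * pderiv_fn i \<zeta> x)
        = (LINT x|lebesgue_on \<Omega>. u x * pderiv_fn i \<zeta> x - v x * pderiv_fn i \<zeta> x)"
      by (simp add: left_diff_distrib)
    also have "\<dots> = (LINT x|lebesgue_on \<Omega>. u x * pderiv_fn i \<zeta> x) - (LINT x|lebesgue_on \<Omega>. v x * pderiv_fn i \<zeta> x)"
      by (rule Bochner_Integration.integral_diff[OF int_mult[OF uL pL] int_mult[OF vL pL]])
    also have "\<dots> = - (LINT x|lebesgue_on \<Omega>. g x $ i * \<zeta> x) + (LINT x|lebesgue_on \<Omega>. h x $ i * \<zeta> x)"
      using ug vh \<zeta> unfolding is_wgrad_def by simp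
    also have "\<dots> = - ((LINT x|lebesgue_on \<Omega>. g x $ i * \<zeta> x) - (LINT x|lebesgue_on \<Omega>. h x $ i * \<zeta> x))" by simp
    also have "(LINT x|lebesgue_on \<Omega>. g x $ i * \<zeta> x) - (LINT x|lebesgue_on \<Omega>. h x $ i * \<zeta> x)
        = (LINT x|lebesgue_on \<Omega>. g x $ i * \<zeta> x - h x $ i * \<zeta> x)"
      by (rule Bochner_Integration.integral_diff[OF int_mult[OF L2_nth[OF gL] cL] int_mult[OF L2_nth[OF hL] cL], symmetric])
    also have "\<dots> = (LINT x|lebesgue_on \<Omega>. (g x - h x) $ i * \<zeta> x)"
      by (simp add: left_diff_distrib)
    finally show "(LINT x|lebesgue_on \<Omega>. (u x - v x) * pderiv_fn i \<zeta> x) = - (LINT x|lebesgue_on \<Omega>. (g x - h x) $ i * \<zeta> x)" .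
  qed
  have t: "\<And>n. test_fn \<Omega> (\<lambda>x. \<phi> n x - \<psi> n x)" using \<phi>(1) \<psi>(1) by (rule test_diff)
  have c1: "(\<lambda>n. L2norm \<Omega> (\<lambda>x. (\<phi> n x - \<psi> n x) - (u x - v x))) \<longlonglongrightarrow> 0"
  proof -
    have "(\<lambda>n. L2norm \<Omega> (\<lambda>x. (\<phi> n x - u x) - (\<psi> n x - v x))) \<longlonglongrightarrow> 0"
      by (rule L2_tendsto_diff[OF \<phi>(2) \<psi>(2)])
         (use \<phi>(1) \<psi>(1) uL vL test_L2 \<Omega> in \<open>auto intro!: L2_diff\<close>)
    moreover have "(\<lambda>x. (\<phi> n x - u x) - (\<psi> n x - v x)) = (\<lambda>x. (\<phi> n x - \<psi> n x) - (u x - v x))" for n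
      by (rule ext) (simp add: algebra_simps)
    ultimately show ?thesis by simp
  qed
  have c2: "(\<lambda>n. L2norm \<Omega> (\<lambda>x. cgrad (\<lambda>x. \<phi> n x - \<psi> n x) x - (g x - h x))) \<longlonglongrightarrow> 0"
  proof -
    have "(\<lambda>n. L2norm \<Omega> (\<lambda>x. (cgrad (\<phi> n) x - g x) - (cgrad (\<psi> n) x - h x))) \<longlonglongrightarrow> 0"
      by (rule L2_tendsto_diff[OF \<phi>(3) \<psi>(3)])
         (use \<phi>(1) \<psi>(1) gL hL test_grad_L2 \<Omega> in \<open>auto intro!: L2_diff\<close>)
    moreover have "(\<lambda>x. (cgrad (\<phi> n) x - g x) - (cgrad (\<psi> n) x - h x)) = (\<lambda>x. cgrad (\<lambda>x. \<phi> n x - \<psi> n x) x - (g x - h x))" for n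
      using cgrad_diff[OF test_smooth[OF \<phi>(1)] test_smooth[OF \<psi>(1)]] by (intro ext) (simp add: algebra_simps)
    ultimately show ?thesis by simp
  qed
  show ?thesis unfolding H10_def
  proof (intro conjI exI[of _ "\<lambda>n x. \<phi> n x - \<psi> n x"] allI)
    show "L2 \<Omega> (\<lambda>x. u x - v x)" by (rule L2_diff[OF uL vL])
    show "L2 \<Omega> (\<lambda>x. g x - h x)" by (rule L2_diff[OF gL hL])
  qed (use wg t c1 c2 in auto)
qed

lemma wdiv_sum_integrable:
  assumes "L2 \<Omega> p" "test_fn \<Omega> \<zeta>" "\<Omega> \<in> sets lebesgue"
  shows "integrable (lebesgue_on \<Omega>) (\<lambda>x. \<Sum>i\<in>UNIV. p x $ i * pderiv_fn i \<zeta> x)"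
  by (rule Bochner_Integration.integrable_sum, rule int_mult[OF L2_nth[OF assms(1)] test_pderiv_L2[OF assms(2,3)]])

lemma Hdiv_diff:
  assumes \<Omega>: "\<Omega> \<in> sets lebesgue" and p: "Hdiv \<Omega> p dp" and q: "Hdiv \<Omega> q dq"
  shows "Hdiv \<Omega> (\<lambda>x. p x - q x) (\<lambda>x. dp x - dq x)"
proof -
  from p have pL: "L2 \<Omega> p" and dpL: "L2 \<Omega> dp" and pd: "is_wdiv \<Omega> p dp" unfolding Hdiv_def by auto
  from q have qL: "L2 \<Omega> q" and dqL: "L2 \<Omega> dq" and qd: "is_wdiv \<Omega> q dq" unfolding Hdiv_def by auto
  have "is_wdiv \<Omega> (\<lambda>x. p x - q x) (\<lambda>x. dp x - dq x)"
    unfolding is_wdiv_def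
  proof (intro allI impI)
    fix \<zeta> :: "real^'a \<Rightarrow> complex"
    assume \<zeta>: "test_fn \<Omega> \<zeta>"
    have cL: "L2 \<Omega> \<zeta>" by (rule test_L2[OF \<zeta> \<Omega>])
    have "(LINT x|lebesgue_on \<Omega>. (\<Sum>i\<in>UNIV. (p x - q x) $ i * pderiv_fn i \<zeta> x))
        = (LINT x|lebesgue_on \<Omega>. (\<Sum>i\<in>UNIV. p x $ i * pderiv_fn i \<zeta> x) - (\<Sum>i\<in>UNIV. q x $ i * pderiv_fn i \<zeta> x))"
      by (simp add: left_diff_distrib sum_subtractf)
    also have "\<dots> = (LINT x|lebesgue_on \<Omega>. (\<Sum>i\<in>UNIV. p x $ i * pderiv_fn i \<zeta> x)) - (LINT x|lebesgue_on \<Omega>. (\<Sum>i\<in>UNIV. q x $ i * pderiv_fn i \<zeta> x))"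
      by (rule Bochner_Integration.integral_diff[OF wdiv_sum_integrable[OF pL \<zeta> \<Omega>] wdiv_sum_integrable[OF qL \<zeta> \<Omega>]])
    also have "\<dots> = - (LINT x|lebesgue_on \<Omega>. dp x * \<zeta> x) + (LINT x|lebesgue_on \<Omega>. dq x * \<zeta> x)"
      using pd qd \<zeta> unfolding is_wdiv_def by simp
    also have "\<dots> = - ((LINT x|lebesgue_on \<Omega>. dp x * \<zeta> x) - (LINT x|lebesgue_on \<Omega>. dq x * \<zeta> x))" by simp
    also have "(LINT x|lebesgue_on \<Omega>. dp x * \<zeta> x) - (LINT x|lebesgue_on \<Omega>. dq x * \<zeta> x)
        = (LINT x|lebesgue_on \<Omega>. dp x * \<zeta> x - dq x * \<zeta> x)"
      by (rule Bochner_Integration.integral_diff[OF int_mult[OF dpL cL] int_mult[OF dqL cL], symmetric])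
    also have "\<dots> = (LINT x|lebesgue_on \<Omega>. (dp x - dq x) * \<zeta> x)"
      by (simp add: left_diff_distrib)
    finally show "(LINT x|lebesgue_on \<Omega>. (\<Sum>i\<in>UNIV. (p x - q x) $ i * pderiv_fn i \<zeta> x)) = - (LINT x|lebesgue_on \<Omega>. (dp x - dq x) * \<zeta> x)" .
  qed
  thus ?thesis unfolding Hdiv_def using L2_diff[OF pL qL] L2_diff[OF dpL dqL] by blast
qed

lemma cinner_diff_right: "cinner v (a - b) = cinner v a - cinner v b"
  unfolding cinner_def by (simp add: sum_subtractf right_diff_distrib)

lemma conv_bound:
  fixes X :: "nat \<Rightarrow> 'b::real_normed_vector"
  assumes "\<And>n. norm (X n - L) \<le> K * e n" "e \<longlonglongrightarrow> 0"
  shows "X \<longlonglongrightarrow> L"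
proof -
  have "(\<lambda>n. norm (X n - L)) \<longlonglongrightarrow> 0"
  proof (rule tendsto_sandwich[where f = "\<lambda>_. 0" and h = "\<lambda>n. K * e n"])
    have "(\<lambda>n. K * e n) \<longlonglongrightarrow> K * 0" by (intro tendsto_intros assms(2))
    thus "(\<lambda>n. K * e n) \<longlonglongrightarrow> 0" by simp
  qed (use assms(1) in auto)
  hence "(\<lambda>n. X n - L) \<longlonglongrightarrow> 0" by (rule tendsto_norm_zero_cancel)
  thus ?thesis by (rule LIM_zero_cancel)
qed

lemma IBP:
  assumes \<Omega>: "\<Omega> \<in> sets lebesgue" and u: "H10 \<Omega> u g" and q: "Hdiv \<Omega> q dq"
  shows "(LINT x|lebesgue_on \<Omega>. cinner (q x) (g x)) = - (LINT x|lebesgue_on \<Omega>. dq x * cnj (u x))"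
proof -
  from u have uL: "L2 \<Omega> u" and gL: "L2 \<Omega> g" unfolding H10_def by auto
  from q have qL: "L2 \<Omega> q" and dqL: "L2 \<Omega> dq" and qd: "is_wdiv \<Omega> q dq" unfolding Hdiv_def by auto
  from u obtain \<phi> where \<phi>: "\<And>n. test_fn \<Omega> (\<phi> n)" "(\<lambda>n. L2norm \<Omega> (\<lambda>x. \<phi> n x - u x)) \<longlonglongrightarrow> 0"
    "(\<lambda>n. L2norm \<Omega> (\<lambda>x. cgrad (\<phi> n) x - g x)) \<longlonglongrightarrow> 0" unfolding H10_def by blast
  have \<phi>L: "L2 \<Omega> (\<phi> n)" for n by (rule test_L2[OF \<phi>(1) \<Omega>])
  have \<phi>gL: "L2 \<Omega> (cgrad (\<phi> n))" for n by (rule test_grad_L2[OF \<phi>(1) \<Omega>])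
  have eqn: "(LINT x|lebesgue_on \<Omega>. cinner (q x) (cgrad (\<phi> n) x)) = - (LINT x|lebesgue_on \<Omega>. dq x * cnj (\<phi> n x))" for n
  proof -
    have "(LINT x|lebesgue_on \<Omega>. (\<Sum>i\<in>UNIV. q x $ i * pderiv_fn i (\<lambda>x. cnj (\<phi> n x)) x))
        = - (LINT x|lebesgue_on \<Omega>. dq x * cnj (\<phi> n x))"
      using qd test_cnj[OF \<phi>(1)] unfolding is_wdiv_def by blast
    moreover have "(\<Sum>i\<in>UNIV. q x $ i * pderiv_fn i (\<lambda>x. cnj (\<phi> n x)) x) = cinner (q x) (cgrad (\<phi> n) x)" for x
      unfolding cinner_def cgrad_def pderiv_cnj[OF test_smooth[OF \<phi>(1)]] by simp
    ultimately show ?thesis by simp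
  qed
  have lim1: "(\<lambda>n. LINT x|lebesgue_on \<Omega>. cinner (q x) (cgrad (\<phi> n) x)) \<longlonglongrightarrow> (LINT x|lebesgue_on \<Omega>. cinner (q x) (g x))"
  proof (rule conv_bound[OF _ \<phi>(3)])
    fix n
    have "(LINT x|lebesgue_on \<Omega>. cinner (q x) (cgrad (\<phi> n) x)) - (LINT x|lebesgue_on \<Omega>. cinner (q x) (g x))
        = (LINT x|lebesgue_on \<Omega>. cinner (q x) (cgrad (\<phi> n) x) - cinner (q x) (g x))"
      by (rule Bochner_Integration.integral_diff[OF int_cinner[OF qL \<phi>gL] int_cinner[OF qL gL], symmetric])
    also have "\<dots> = (LINT x|lebesgue_on \<Omega>. cinner (q x) (cgrad (\<phi> n) x - g x))"
      by (simp add: cinner_diff_right)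
    finally show "norm ((LINT x|lebesgue_on \<Omega>. cinner (q x) (cgrad (\<phi> n) x)) - (LINT x|lebesgue_on \<Omega>. cinner (q x) (g x)))
        \<le> L2norm \<Omega> q * L2norm \<Omega> (\<lambda>x. cgrad (\<phi> n) x - g x)"
      using CS_cinner[OF qL L2_diff[OF \<phi>gL gL]] by simp
  qed
  have lim2: "(\<lambda>n. LINT x|lebesgue_on \<Omega>. dq x * cnj (\<phi> n x)) \<longlonglongrightarrow> (LINT x|lebesgue_on \<Omega>. dq x * cnj (u x))"
  proof (rule conv_bound[OF _ \<phi>(2)])
    fix n
    have "(LINT x|lebesgue_on \<Omega>. dq x * cnj (\<phi> n x)) - (LINT x|lebesgue_on \<Omega>. dq x * cnj (u x))
        = (LINT x|lebesgue_on \<Omega>. dq x * cnj (\<phi> n x) - dq x * cnj (u x))"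
      by (rule Bochner_Integration.integral_diff[OF int_mult_cnj[OF dqL \<phi>L] int_mult_cnj[OF dqL uL], symmetric])
    also have "\<dots> = (LINT x|lebesgue_on \<Omega>. dq x * cnj (\<phi> n x - u x))"
      by (simp add: right_diff_distrib)
    finally show "norm ((LINT x|lebesgue_on \<Omega>. dq x * cnj (\<phi> n x)) - (LINT x|lebesgue_on \<Omega>. dq x * cnj (u x)))
        \<le> L2norm \<Omega> dq * L2norm \<Omega> (\<lambda>x. \<phi> n x - u x)"
      using CS_mult[OF dqL L2_diff[OF \<phi>L uL]] by simp
  qed
  have "(\<lambda>n. LINT x|lebesgue_on \<Omega>. cinner (q x) (cgrad (\<phi> n) x)) \<longlonglongrightarrow> - (LINT x|lebesgue_on \<Omega>. dq x * cnj (u x))"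
    unfolding eqn by (intro tendsto_minus lim2)
  with lim1 show ?thesis by (rule LIMSEQ_unique)
qed

section \<open>Pointwise matrix facts\<close>

lemma cinner_cnj: "cinner w v = cnj (cinner v w)"
  unfolding cinner_def by (simp add: mult.commute)

lemma cinner_diff_left: "cinner (a - b) v = cinner a v - cinner b v"
  unfolding cinner_def by (simp add: sum_subtractf left_diff_distrib)

lemma cinner_add_left: "cinner (a + b) v = cinner a v + cinner b v"
  unfolding cinner_def by (simp add: sum.distrib distrib_right)

lemma cinner_add_right: "cinner v (a + b) = cinner v a + cinner v b"
  unfolding cinner_def by (simp add: sum.distrib distrib_left)

lemma cinner_zero_left[simp]: "cinner 0 v = 0"
  unfolding cinner_def by simp

lemma Re_cinner_le: "Re (cinner v w) \<le> norm (cinner v w)"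
  by (rule complex_Re_le_cmod)

lemma herm_adj:
  fixes B :: "complex^'n^'n"
  assumes herm: "\<forall>i j. B $ i $ j = cnj (B $ j $ i)"
  shows "cinner (B *v v) w = cinner v (B *v w)"
proof -
  have "cinner (B *v v) w = (\<Sum>i\<in>UNIV. \<Sum>j\<in>UNIV. B $ i $ j * v $ j * cnj (w $ i))"
    unfolding cinner_def matrix_vector_mult_def by (simp add: sum_distrib_right)
  also have "\<dots> = (\<Sum>j\<in>UNIV. \<Sum>i\<in>UNIV. B $ i $ j * v $ j * cnj (w $ i))" by (rule sum.swap)
  also have "\<dots> = cinner v (B *v w)"
    unfolding cinner_def matrix_vector_mult_def
    by (simp add: sum_distrib_left) (intro sum.cong refl, subst herm, simp add: mult_ac)
  finally show ?thesis .
qed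

lemma ell_inj:
  fixes B :: "complex^'n^'n"
  assumes \<alpha>: "\<alpha> > 0" and ell: "\<forall>v. \<alpha> * (norm v)\<^sup>2 \<le> Re (cinner (B *v v) v)"
  shows "invertible B"
proof -
  have "inj ((*v) B)"
  proof (rule injI)
    fix v w assume "B *v v = B *v w"
    hence "B *v (v - w) = 0" by (simp add: matrix_vector_mult_diff_distrib)
    hence "\<alpha> * (norm (v - w))\<^sup>2 \<le> 0" using ell[rule_format, of "v - w"] by simp
    hence "(norm (v - w))\<^sup>2 \<le> 0" using \<alpha> by (simp add: mult_le_0_iff)
    thus "v = w" by simp
  qed
  thus ?thesis using invertible_left_inverse matrix_left_invertible_injective by blast
qed

lemma matrix_inv_props:
  fixes B :: "complex^'n^'n"
  assumes "invertible B"
  shows "B ** matrix_inv B = mat 1" "matrix_inv B ** B = mat 1"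
proof -
  have "\<exists>A'. B ** A' = mat 1 \<and> A' ** B = mat 1" using assms unfolding invertible_def .
  hence "B ** matrix_inv B = mat 1 \<and> matrix_inv B ** B = mat 1"
    unfolding matrix_inv_def by (rule someI_ex)
  thus "B ** matrix_inv B = mat 1" "matrix_inv B ** B = mat 1" by auto
qed

lemma matrix_inv_apply:
  fixes B :: "complex^'n^'n"
  assumes "invertible B"
  shows "B *v (matrix_inv B *v v) = v" "matrix_inv B *v (B *v v) = v"
  using matrix_inv_props[OF assms] by (simp_all add: matrix_vector_mul_assoc)

lemma lin_help: "(y::real) \<le> c \<Longrightarrow> c \<le> (P + y) / 2 \<Longrightarrow> c \<le> P" by (simp add: field_simps)

locale ellmat =
  fixes B :: "complex^'n^'n" and \<alpha> :: real
  assumes \<alpha>: "\<alpha> > 0"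
    and herm: "\<forall>i j. B $ i $ j = cnj (B $ j $ i)"
    and ell: "\<forall>v. \<alpha> * (norm v)\<^sup>2 \<le> Re (cinner (B *v v) v)"
begin

abbreviation "Bi \<equiv> matrix_inv B"

lemma inv: "invertible B" by (rule ell_inj[OF \<alpha> ell])

lemma BBi: "B *v (Bi *v v) = v" and BiB: "Bi *v (B *v v) = v"
  using matrix_inv_apply[OF inv] by auto

lemma Q_lower: "\<alpha> * (norm (Bi *v v))\<^sup>2 \<le> Re (cinner (Bi *v v) v)"
proof -
  let ?w = "Bi *v v"
  have "\<alpha> * (norm ?w)\<^sup>2 \<le> Re (cinner (B *v ?w) ?w)" using ell by blast
  also have "cinner (B *v ?w) ?w = cinner ?w (B *v ?w)" by (rule herm_adj[OF herm])
  also have "\<dots> = cinner ?w v" by (simp add: BBi)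
  finally show ?thesis .
qed

lemma Q_nonneg: "0 \<le> Re (cinner (Bi *v v) v)"
  using Q_lower[of v] \<alpha> by (smt (verit) mult_nonneg_nonneg zero_le_power2)

lemma Q_bound: "norm (cinner (Bi *v v) v) \<le> (norm v)\<^sup>2 / \<alpha>"
proof -
  let ?w = "Bi *v v"
  let ?c = "norm (cinner (Bi *v v) v)"
  have c1: "\<alpha> * (norm ?w)\<^sup>2 \<le> ?c" using Q_lower[of v] Re_cinner_le[of ?w v] by linarith
  have "?c \<le> ((1/\<alpha>) * (norm v)\<^sup>2 + (norm ?w)\<^sup>2 / (1/\<alpha>)) / 2"
  proof -
    have "norm (cinner ?w v) = norm (cinner v ?w)" by (simp add: cinner_cnj[of ?w v])
    also have "\<dots> \<le> ((1/\<alpha>) * (norm v)\<^sup>2 + (norm ?w)\<^sup>2 / (1/\<alpha>)) / 2" by (rule young_cinner) (use \<alpha> in simp)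
    finally show ?thesis .
  qed
  also have "\<dots> = ((norm v)\<^sup>2 / \<alpha> + \<alpha> * (norm ?w)\<^sup>2) / 2" by simp
  finally have "?c \<le> ((norm v)\<^sup>2 / \<alpha> + \<alpha> * (norm ?w)\<^sup>2) / 2" .
  with c1 show ?thesis by (rule lin_help)
qed

lemma Q_AB: "Re (cinner (Bi *v (B *v g)) (B *v g)) = Re (cinner (B *v g) g)"
proof -
  have "cinner (Bi *v (B *v g)) (B *v g) = cinner g (B *v g)" by (simp add: BiB)
  also have "\<dots> = cnj (cinner (B *v g) g)" by (rule cinner_cnj)
  finally show ?thesis by simp
qed

lemma Q_para: "Re (cinner (Bi *v (a - b)) (a - b)) \<le> 2 * Re (cinner (Bi *v a) a) + 2 * Re (cinner (Bi *v b) b)"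
proof -
  have id: "cinner (Bi *v (a - b)) (a - b) + cinner (Bi *v (a + b)) (a + b) = 2 * cinner (Bi *v a) a + 2 * cinner (Bi *v b) b"
    by (simp add: matrix_vector_mult_diff_distrib matrix_vector_right_distrib cinner_diff_left cinner_diff_right
        cinner_add_left cinner_add_right)
  have "0 \<le> Re (cinner (Bi *v (a + b)) (a + b))" by (rule Q_nonneg)
  moreover have "Re (cinner (Bi *v (a - b)) (a - b)) + Re (cinner (Bi *v (a + b)) (a + b)) = 2 * Re (cinner (Bi *v a) a) + 2 * Re (cinner (Bi *v b) b)"
    using arg_cong[OF id, of Re] by simp
  ultimately show ?thesis by linarith
qed

lemma Q_ident:
  "Re (cinner (Bi *v (B *v g - d)) (B *v g - d)) = Re (cinner (B *v g) g) + Re (cinner (Bi *v d) d) - 2 * Re (cinner d g)"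
proof -
  have "cinner (Bi *v (B *v g - d)) (B *v g - d) = cinner (g - Bi *v d) (B *v g - d)"
    by (simp add: matrix_vector_mult_diff_distrib BiB)
  also have "\<dots> = cinner g (B *v g) - cinner g d - cinner (Bi *v d) (B *v g) + cinner (Bi *v d) d"
    by (simp add: cinner_diff_left cinner_diff_right)
  also have "cinner (Bi *v d) (B *v g) = cinner (B *v (Bi *v d)) g" by (rule herm_adj[OF herm, symmetric])
  also have "\<dots> = cinner d g" by (simp add: BBi)
  also have "cinner g (B *v g) = cnj (cinner (B *v g) g)" by (rule cinner_cnj)
  also have "cinner g d = cnj (cinner d g)" by (rule cinner_cnj)
  finally show ?thesis by simp
qed

end

section \<open>Measurability of the inverse\<close>

lemma meas_det:
  fixes B :: "_ \<Rightarrow> complex^'n^'n"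
  assumes "B \<in> borel_measurable M"
  shows "(\<lambda>x. det (B x)) \<in> borel_measurable M"
  unfolding det_def
  by (intro borel_measurable_sum borel_measurable_times borel_measurable_prod borel_measurable_const
      meas_nth assms)

lemma matrix_inv_cramer:
  fixes B :: "complex^'n^'n"
  assumes "det B \<noteq> 0"
  shows "matrix_inv B = (\<chi> i j. det (\<chi> r s. if s = i then (if r = j then 1 else 0) else B $ r $ s) / det B)"
proof -
  have inv: "invertible B" using assms invertible_det_nz by blast
  have "matrix_inv B $ i $ j = det (\<chi> r s. if s = i then (if r = j then 1 else 0) else B $ r $ s) / det B" for i j
  proof -
    have "B *v (matrix_inv B *v axis j 1) = axis j 1" by (rule matrix_inv_apply(1)[OF inv])
    hence "matrix_inv B *v axis j 1 = (\<chi> k. det (\<chi> r s. if s = k then (axis j 1 :: complex^'n) $ r else B $ r $ s) / det B)"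
      using cramer[OF assms] by blast
    hence "(matrix_inv B *v axis j 1) $ i = det (\<chi> r s. if s = i then (axis j 1 :: complex^'n) $ r else B $ r $ s) / det B"
      by simp
    moreover have "(matrix_inv B *v axis j 1) $ i = matrix_inv B $ i $ j"
      unfolding matrix_vector_mult_def axis_def by (simp add: if_distrib cong: if_cong)
    moreover have "(\<chi> r s. if s = i then (axis j 1 :: complex^'n) $ r else B $ r $ s)
        = (\<chi> r s. if s = i then (if r = j then 1 else 0) else B $ r $ s)"
      by (simp add: axis_def vec_eq_iff)
    ultimately show ?thesis by simp
  qed
  thus ?thesis by (simp add: vec_eq_iff)
qed

lemma matrix_inv_noninv:
  fixes B :: "complex^'n^'n"
  assumes "\<not> invertible B"
  shows "matrix_inv B = (SOME A'::complex^'n^'n. False)"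
proof -
  have "(\<lambda>A'. B ** A' = mat 1 \<and> A' ** B = mat 1) = (\<lambda>_. False)" using assms unfolding invertible_def by auto
  thus ?thesis unfolding matrix_inv_def by simp
qed

lemma meas_matrix_inv:
  fixes A :: "_ \<Rightarrow> complex^'n^'n"
  assumes A: "A \<in> borel_measurable M"
  shows "(\<lambda>x. matrix_inv (A x)) \<in> borel_measurable M"
proof -
  let ?C = "\<lambda>x. (\<chi> i j. det (\<chi> r s. if s = i then (if r = j then 1 else 0) else A x $ r $ s) / det (A x)) :: complex^'n^'n"
  have eq: "(\<lambda>x. matrix_inv (A x)) = (\<lambda>x. if det (A x) = 0 then (SOME A'::complex^'n^'n. False) else ?C x)"
    by (rule ext) (simp add: matrix_inv_cramer matrix_inv_noninv invertible_det_nz)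
  have mC: "?C \<in> borel_measurable M"
  proof (intro meas_vec)
    fix i j
    have "(\<lambda>x. (\<chi> r s. if s = i then (if r = j then 1 else 0) else A x $ r $ s) :: complex^'n^'n) \<in> borel_measurable M"
      apply (intro meas_vec)
      subgoal for r s by (cases "s = i"; cases "r = j") (simp_all add: meas_nth A)
      done
    hence "(\<lambda>x. det (\<chi> r s. if s = i then (if r = j then 1 else 0) else A x $ r $ s)) \<in> borel_measurable M"
      by (rule meas_det)
    thus "(\<lambda>x. ?C x $ i $ j) \<in> borel_measurable M"
      by (simp add: borel_measurable_divide meas_det A)
  qed
  have "{x \<in> space M. det (A x) = 0} \<in> sets M"
    by (rule measurable_equality_set) (auto intro: meas_det A)
  hence "(\<lambda>x. if det (A x) = 0 then (SOME A'::complex^'n^'n. False) else ?C x) \<in> borel_measurable M"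
    by (intro measurable_If mC) auto
  thus ?thesis unfolding eq .
qed


section \<open>Bounds and pointwise ellipticity\<close>

lemma meas_Re[measurable (raw)]:
  "f \<in> borel_measurable M \<Longrightarrow> (\<lambda>x. Re (f x :: complex)) \<in> borel_measurable M"
  by (rule measurable_compose[of f M borel], assumption, rule borel_measurable_continuous_onI, intro continuous_intros)

lemma norm_le_sum_vec: "norm (x :: 'a::real_normed_vector^'n) \<le> (\<Sum>i\<in>UNIV. norm (x $ i))"
  unfolding norm_vec_def by (rule L2_set_le_sum) simp

lemma norm_mv_le:
  fixes A :: "complex^'n^'m"
  shows "norm (A *v v) \<le> real CARD('m) * real CARD('n) * norm A * norm v"
proof -
  have c: "norm ((A *v v) $ i) \<le> real CARD('n) * (norm A * norm v)" for i
  proof -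
    have "norm ((A *v v) $ i) \<le> (\<Sum>j\<in>UNIV. norm (A $ i $ j * v $ j))"
      unfolding matrix_vector_mult_def by (simp add: norm_sum)
    also have "\<dots> \<le> (\<Sum>j\<in>(UNIV::'n set). norm A * norm v)"
    proof (rule sum_mono)
      fix j
      have "norm (A $ i $ j) \<le> norm A"
        using Finite_Cartesian_Product.norm_nth_le[of "A $ i" j] Finite_Cartesian_Product.norm_nth_le[of A i] by linarith
      moreover have "norm (v $ j) \<le> norm v" by (rule Finite_Cartesian_Product.norm_nth_le)
      ultimately show "norm (A $ i $ j * v $ j) \<le> norm A * norm v"
        unfolding norm_mult by (intro mult_mono) auto
    qed
    finally show ?thesis by simp
  qed
  have "norm (A *v v) \<le> (\<Sum>i\<in>UNIV. norm ((A *v v) $ i))" by (rule norm_le_sum_vec)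
  also have "\<dots> \<le> (\<Sum>i\<in>(UNIV::'m set). real CARD('n) * (norm A * norm v))" by (rule sum_mono[OF c])
  finally show ?thesis by (simp add: mult_ac)
qed

lemma L2_mv:
  fixes A :: "real^'d \<Rightarrow> complex^'n^'m"
  assumes Am: "A \<in> borel_measurable (lebesgue_on \<Omega>)" and Ab: "AE x in lebesgue_on \<Omega>. norm (A x) \<le> K"
    and g: "L2 \<Omega> g"
  shows "L2 \<Omega> (\<lambda>x. A x *v g x)"
  unfolding L2_def
proof
  show m: "(\<lambda>x. A x *v g x) \<in> borel_measurable (lebesgue_on \<Omega>)" using Am g unfolding L2_def by (intro meas_mv) auto
  let ?c = "real CARD('m) * real CARD('n)"
  show "integrable (lebesgue_on \<Omega>) (\<lambda>x. (norm (A x *v g x))\<^sup>2)"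
  proof (rule Bochner_Integration.integrable_bound[where f = "\<lambda>x. (?c * K)\<^sup>2 * (norm (g x))\<^sup>2"])
    show "integrable (lebesgue_on \<Omega>) (\<lambda>x. (?c * K)\<^sup>2 * (norm (g x))\<^sup>2)" using g unfolding L2_def by simp
    show "(\<lambda>x. (norm (A x *v g x))\<^sup>2) \<in> borel_measurable (lebesgue_on \<Omega>)" using m by simp
    show "AE x in lebesgue_on \<Omega>. norm ((norm (A x *v g x))\<^sup>2) \<le> norm ((?c * K)\<^sup>2 * (norm (g x))\<^sup>2)"
      using Ab
    proof eventually_elim
      case (elim x)
      have "norm (A x *v g x) \<le> ?c * norm (A x) * norm (g x)" using norm_mv_le[of "A x" "g x"] by simp
      also have "\<dots> \<le> ?c * K * norm (g x)" using elim by (intro mult_right_mono mult_left_mono) auto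
      finally have "(norm (A x *v g x))\<^sup>2 \<le> (?c * K * norm (g x))\<^sup>2" by (intro power_mono) auto
      thus ?case by (simp add: power_mult_distrib)
    qed
  qed
qed

lemma ell_single:
  fixes A :: "real^'d \<Rightarrow> complex^'d^'d"
  assumes \<Omega>: "\<Omega> \<in> sets lebesgue" and Am: "A \<in> borel_measurable (lebesgue_on \<Omega>)"
    and \<alpha>: "0 < \<alpha>"
    and A_ell: "\<forall>\<phi>::real^'d \<Rightarrow> complex^'d. L2 \<Omega> \<phi> \<longrightarrow>
        \<alpha> * (L2norm \<Omega> \<phi>)\<^sup>2 \<le> Re (L2inner \<Omega> (\<lambda>x. A x *v \<phi> x) \<phi>)"
  shows "AE x in lebesgue_on \<Omega>. \<alpha> * (norm v)\<^sup>2 \<le> Re (cinner (A x *v v) v)"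
proof -
  let ?M = "lebesgue_on \<Omega>"
  define h where "h x = Re (cinner (A x *v v) v) - \<alpha> * (norm v)\<^sup>2" for x
  have hm: "h \<in> borel_measurable ?M" unfolding h_def
    by (intro borel_measurable_diff meas_Re meas_cinner meas_mv Am borel_measurable_const)
  have nm: "(\<lambda>x. norm x) \<in> borel_measurable ?M"
    by (rule continuous_imp_measurable_on_sets_lebesgue[OF _ \<Omega>]) (intro continuous_intros)
  have TMn: "{x \<in> space ?M. h x < 0 \<and> norm x \<le> real n} \<in> sets ?M" for n :: nat
  proof -
    have T_eq: "{x \<in> space ?M. h x < 0 \<and> norm x \<le> real n} = {x \<in> space ?M. h x < 0} \<inter> {x \<in> space ?M. norm x \<le> real n}" by auto
    show ?thesis unfolding T_eq
      by (intro sets.Int borel_measurable_less borel_measurable_le hm nm borel_measurable_const)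
  qed
  have null: "emeasure ?M {x \<in> space ?M. h x < 0 \<and> norm x \<le> real n} = 0" for n :: nat
  proof -
    define T where "T = {x \<in> space ?M. h x < 0 \<and> norm x \<le> real n}"
    have TM: "T \<in> sets ?M" unfolding T_def by (rule TMn)
    have TO: "T \<subseteq> \<Omega>" unfolding T_def by simp
    have TL: "T \<in> sets lebesgue" using TM \<Omega> by (simp add: sets_restrict_space_iff)
    have "bounded T"
      unfolding bounded_iff T_def by (intro exI[of _ "real n"]) auto
    hence "T \<in> lmeasurable" using TL by (rule bounded_set_imp_lmeasurable)
    hence "emeasure lebesgue T \<noteq> top" by (rule fmeasurableD2)
    hence finL: "emeasure lebesgue T < \<infinity>" by (simp add: less_top)
    have "\<Omega> \<inter> space lebesgue \<in> sets lebesgue" using \<Omega> by simp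
    hence emT: "emeasure ?M T = emeasure lebesgue T" using TO by (rule emeasure_restrict_space)
    have fin: "emeasure ?M T < \<infinity>" using finL emT by simp
    define \<phi> where "\<phi> x = indicator T x *\<^sub>R v" for x
    have \<phi>_if: "\<phi> x = (if x \<in> T then v else 0)" for x unfolding \<phi>_def by simp
    have nphi: "(norm (\<phi> x))\<^sup>2 = indicator T x * (norm v)\<^sup>2" for x unfolding \<phi>_if by (simp add: indicator_def)
    have iT: "integrable ?M (indicat_real T)" by (rule integrable_real_indicator[OF TM fin])
    have \<phi>L: "L2 \<Omega> \<phi>" unfolding L2_def
    proof
      show "\<phi> \<in> borel_measurable ?M" unfolding \<phi>_def[abs_def]
        by (intro borel_measurable_scaleR borel_measurable_indicator TM borel_measurable_const)
      show "integrable ?M (\<lambda>x. (norm (\<phi> x))\<^sup>2)" unfolding nphi by (intro integrable_mult_left iT)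
    qed
    have ellT: "\<alpha> * (L2norm \<Omega> \<phi>)\<^sup>2 \<le> Re (L2inner \<Omega> (\<lambda>x. A x *v \<phi> x) \<phi>)" using A_ell \<phi>L by blast
    have L2n: "(L2norm \<Omega> \<phi>)\<^sup>2 = measure ?M T * (norm v)\<^sup>2"
      unfolding L2norm_sq nphi integral_mult_left_zero integral_indicator using TO by (simp add: Int_absorb2)
    define g where "g x = indicator T x *\<^sub>R cinner (A x *v v) v" for x
    have inner_eq: "L2inner \<Omega> (\<lambda>x. A x *v \<phi> x) \<phi> = (LINT x|?M. g x)"
      unfolding L2inner_def g_def \<phi>_if by (intro Bochner_Integration.integral_cong refl) (simp add: indicator_def)
    have mT: "measure ?M T = 0"
    proof (cases "integrable ?M g")
      case True
      have Reg: "Re (LINT x|?M. g x) = (LINT x|?M. indicator T x * Re (cinner (A x *v v) v))"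
        using integral_Re[OF True] unfolding g_def by simp
      have iRe: "integrable ?M (\<lambda>x. indicator T x * Re (cinner (A x *v v) v))"
        using integrable_Re[OF True] unfolding g_def by simp
      have iC: "integrable ?M (\<lambda>x. indicator T x * (\<alpha> * (norm v)\<^sup>2))" by (intro integrable_mult_left iT)
      have "0 \<le> (LINT x|?M. indicator T x * Re (cinner (A x *v v) v)) - (LINT x|?M. indicator T x * (\<alpha> * (norm v)\<^sup>2))"
        using ellT L2n unfolding inner_eq Reg integral_mult_left_zero integral_indicator using TO
        by (simp add: Int_absorb2 mult_ac)
      also have "\<dots> = (LINT x|?M. indicator T x * h x)"
        unfolding h_def by (subst Bochner_Integration.integral_diff[OF iRe iC, symmetric]) (simp add: right_diff_distrib)
      finally have I0: "0 \<le> (LINT x|?M. indicator T x * h x)" .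
      define k where "k x = - (indicator T x * h x)" for x
      have k0: "0 \<le> k x" for x unfolding k_def T_def by (auto simp: indicator_def)
      have ik: "integrable ?M k" unfolding k_def h_def using iRe iC
        by (intro integrable_minus) (simp add: right_diff_distrib)
      have "(LINT x|?M. k x) \<le> 0" unfolding k_def using I0 by simp
      moreover have "0 \<le> (LINT x|?M. k x)" using k0 by (intro integral_nonneg_AE) auto
      ultimately have "(LINT x|?M. k x) = 0" by simp
      hence "AE x in ?M. k x = 0" using integral_nonneg_eq_0_iff_AE[OF ik] k0 by auto
      hence "AE x in ?M. x \<notin> T" by eventually_elim (auto simp: k_def T_def indicator_def)
      moreover have "{x \<in> space ?M. \<not> x \<notin> T} = T" using sets.sets_into_space[OF TM] by blast
      ultimately have "emeasure ?M T = 0" using AE_iff_measurable[OF TM, of "\<lambda>x. x \<notin> T"] by simp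
      thus ?thesis by (simp add: measure_def)
    next
      case False
      hence "(LINT x|?M. g x) = 0" by (rule not_integrable_integral_eq)
      hence le: "\<alpha> * (measure ?M T * (norm v)\<^sup>2) \<le> 0" using ellT L2n inner_eq by simp
      show ?thesis
      proof (cases "v = 0")
        case True
        hence "T = {}" unfolding T_def h_def by simp
        thus ?thesis by simp
      next
        case False
        hence "(norm v)\<^sup>2 > 0" by simp
        hence "measure ?M T \<le> 0" using le \<alpha> by (simp add: mult_le_0_iff)
        thus ?thesis using measure_nonneg[of ?M T] by linarith
      qed
    qed
    have "emeasure ?M T = ennreal (measure ?M T)"
      using fin by (intro emeasure_eq_ennreal_measure) simp
    thus ?thesis using mT unfolding T_def by simp
  qed
  have "AE x in ?M. \<forall>n::nat. \<not> (h x < 0 \<and> norm x \<le> real n)"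
  proof (subst AE_all_countable, intro allI)
    fix n :: nat
    show "AE x in ?M. \<not> (h x < 0 \<and> norm x \<le> real n)"
    proof (subst AE_iff_measurable)
      show "{x \<in> space ?M. h x < 0 \<and> norm x \<le> real n} \<in> sets ?M" by (rule TMn)
    qed (use null in auto)
  qed
  thus ?thesis
  proof eventually_elim
    case (elim x)
    have "norm x \<le> real (nat \<lceil>norm x\<rceil>)" by linarith
    hence "\<not> h x < 0" using elim[rule_format, of "nat \<lceil>norm x\<rceil>"] by simp
    thus ?case unfolding h_def by simp
  qed
qed

lemma cont_Q: "continuous_on UNIV (\<lambda>v. Re (cinner ((B::complex^'n^'n) *v v) v))"
  unfolding cinner_def matrix_vector_mult_def by (simp, intro continuous_intros)

lemma ell_pointwise:
  fixes A :: "real^'d \<Rightarrow> complex^'d^'d"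
  assumes \<Omega>: "\<Omega> \<in> sets lebesgue" and Am: "A \<in> borel_measurable (lebesgue_on \<Omega>)"
    and \<alpha>: "0 < \<alpha>"
    and A_ell: "\<forall>\<phi>::real^'d \<Rightarrow> complex^'d. L2 \<Omega> \<phi> \<longrightarrow>
        \<alpha> * (L2norm \<Omega> \<phi>)\<^sup>2 \<le> Re (L2inner \<Omega> (\<lambda>x. A x *v \<phi> x) \<phi>)"
  shows "AE x in lebesgue_on \<Omega>. \<forall>v. \<alpha> * (norm v)\<^sup>2 \<le> Re (cinner (A x *v v) v)"
proof -
  obtain D :: "(complex^'d) set" where D: "countable D" and dense: "\<And>X. open X \<Longrightarrow> X \<noteq> {} \<Longrightarrow> \<exists>d\<in>D. d \<in> X"
    by (rule countable_dense_setE) blast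
  have "AE x in lebesgue_on \<Omega>. \<forall>v\<in>D. \<alpha> * (norm v)\<^sup>2 \<le> Re (cinner (A x *v v) v)"
    using D by (subst AE_ball_countable) (auto intro: ell_single[OF \<Omega> Am \<alpha> A_ell])
  thus ?thesis
  proof eventually_elim
    case (elim x)
    let ?C = "{v. \<alpha> * (norm v)\<^sup>2 \<le> Re (cinner (A x *v v) v)}"
    have cl: "closed ?C"
      by (intro closed_Collect_le cont_Q) (intro continuous_intros)
    show ?case
    proof (rule allI, rule ccontr)
      fix v assume "\<not> \<alpha> * (norm v)\<^sup>2 \<le> Re (cinner (A x *v v) v)"
      hence "v \<in> - ?C" by simp
      moreover have "open (- ?C)" using cl by (simp add: open_Compl)
      ultimately obtain d where "d \<in> D" "d \<in> - ?C" using dense[of "- ?C"] by blast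
      thus False using elim by simp
    qed
  qed
qed

theorem corollary4p2:
  fixes \<Omega> :: "(real^'d) set"
    and A :: "real^'d \<Rightarrow> complex^'d^'d"
    and \<alpha> \<beta> C\<^sub>F :: real
    and f u ut :: "real^'d \<Rightarrow> complex"
    and gu gut p pt :: "real^'d \<Rightarrow> complex^'d"
    and dp dpt :: "real^'d \<Rightarrow> complex"
  assumes "open \<Omega>" and "connected \<Omega>"
    and A_meas: "A \<in> borel_measurable (lebesgue_on \<Omega>)"
    and A_bdd: "\<exists>M. AE x in lebesgue_on \<Omega>. norm (A x) \<le> M"
    and A_herm: "\<forall>x\<in>\<Omega>. \<forall>i j. A x $ i $ j = cnj (A x $ j $ i)"
    and "0 < \<alpha>" and "\<alpha> \<le> \<beta>"
    and A_ell: "\<forall>\<phi>::real^'d \<Rightarrow> complex^'d. L2 \<Omega> \<phi> \<longrightarrow>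
        \<alpha> * (L2norm \<Omega> \<phi>)\<^sup>2 \<le> Re (L2inner \<Omega> (\<lambda>x. A x *v \<phi> x) \<phi>)
        \<and> Re (L2inner \<Omega> (\<lambda>x. A x *v \<phi> x) \<phi>) \<le> \<beta> * (L2norm \<Omega> \<phi>)\<^sup>2"
    and f_L2: "L2 \<Omega> f"
    and friedrichs: "\<forall>w gw. H10 \<Omega> w gw \<longrightarrow> L2norm \<Omega> w \<le> C\<^sub>F * L2norm \<Omega> gw"
    and u: "H10 \<Omega> u gu" and p: "Hdiv \<Omega> p dp"
    and p_eq: "AE x in lebesgue_on \<Omega>. p x = A x *v gu x"
    and div_eq: "AE x in lebesgue_on \<Omega>. - dp x = f x"
    and ut: "H10 \<Omega> ut gut" and pt: "Hdiv \<Omega> pt dpt"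
  shows "((1/2) * wnorm2 \<Omega> (\<lambda>x. matrix_inv (A x)) (\<lambda>x. pt x - A x *v gut x)
           + (L2norm \<Omega> (\<lambda>x. f x + dpt x))\<^sup>2
         \<le> wnorm2 \<Omega> A (\<lambda>x. gu x - gut x)
           + wnorm2 \<Omega> (\<lambda>x. matrix_inv (A x)) (\<lambda>x. p x - pt x)
           + (L2norm \<Omega> (\<lambda>x. dp x - dpt x))\<^sup>2)
       \<and> (wnorm2 \<Omega> A (\<lambda>x. gu x - gut x)
           + wnorm2 \<Omega> (\<lambda>x. matrix_inv (A x)) (\<lambda>x. p x - pt x)
           + (L2norm \<Omega> (\<lambda>x. dp x - dpt x))\<^sup>2
         \<le> 2 * wnorm2 \<Omega> (\<lambda>x. matrix_inv (A x)) (\<lambda>x. pt x - A x *v gut x)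
           + (1 + 4 * C\<^sub>F\<^sup>2 / \<alpha>) * (L2norm \<Omega> (\<lambda>x. f x + dpt x))\<^sup>2)"
proof -
  let ?M = "lebesgue_on \<Omega>"
  let ?Ai = "\<lambda>x. matrix_inv (A x)"
  let ?e = "\<lambda>x. pt x - A x *v gut x"
  let ?gw = "\<lambda>x. gu x - gut x"
  let ?d = "\<lambda>x. p x - pt x"
  let ?dd = "\<lambda>x. dp x - dpt x"
  let ?r = "\<lambda>x. f x + dpt x"
  let ?w = "\<lambda>x. u x - ut x"
  have \<Omega>: "\<Omega> \<in> sets lebesgue" using \<open>open \<Omega>\<close> by (rule open_lebesgue)
  have \<alpha>: "0 < \<alpha>" by fact
  from u have uL: "L2 \<Omega> u" and guL: "L2 \<Omega> gu" unfolding H10_def by auto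
  from ut have utL: "L2 \<Omega> ut" and gutL: "L2 \<Omega> gut" unfolding H10_def by auto
  from p have pL: "L2 \<Omega> p" and dpL: "L2 \<Omega> dp" unfolding Hdiv_def by auto
  from pt have ptL: "L2 \<Omega> pt" and dptL: "L2 \<Omega> dpt" unfolding Hdiv_def by auto
  obtain K where K: "AE x in ?M. norm (A x) \<le> K" using A_bdd by blast
  have gwL: "L2 \<Omega> ?gw" by (rule L2_diff[OF guL gutL])
  have dL: "L2 \<Omega> ?d" by (rule L2_diff[OF pL ptL])
  have ddL: "L2 \<Omega> ?dd" by (rule L2_diff[OF dpL dptL])
  have rL: "L2 \<Omega> ?r" by (rule L2_add[OF f_L2 dptL])
  have wL: "L2 \<Omega> ?w" by (rule L2_diff[OF uL utL])
  have AgwL: "L2 \<Omega> (\<lambda>x. A x *v ?gw x)" by (rule L2_mv[OF A_meas K gwL])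
  have AgutL: "L2 \<Omega> (\<lambda>x. A x *v gut x)" by (rule L2_mv[OF A_meas K gutL])
  have eL: "L2 \<Omega> ?e" by (rule L2_diff[OF ptL AgutL])
  have Hw: "H10 \<Omega> ?w ?gw" by (rule H10_diff[OF \<Omega> u ut])
  have Hd: "Hdiv \<Omega> ?d ?dd" by (rule Hdiv_diff[OF \<Omega> p pt])
  have Aim: "?Ai \<in> borel_measurable ?M" by (rule meas_matrix_inv[OF A_meas])
  have PE: "AE x in ?M. \<forall>v. \<alpha> * (norm v)\<^sup>2 \<le> Re (cinner (A x *v v) v)"
  proof (rule ell_pointwise[OF \<Omega> A_meas \<alpha>])
    show "\<forall>\<phi>::real^'d \<Rightarrow> complex^'d. L2 \<Omega> \<phi> \<longrightarrow> \<alpha> * (L2norm \<Omega> \<phi>)\<^sup>2 \<le> Re (L2inner \<Omega> (\<lambda>x. A x *v \<phi> x) \<phi>)"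
      using A_ell by blast
  qed
  have EM: "AE x in ?M. ellmat (A x) \<alpha>"
    using PE
  proof (rule lebesgue_on_mono)
    fix x
    assume "\<forall>v. \<alpha> * (norm v)\<^sup>2 \<le> Re (cinner (A x *v v) v)" "x \<in> \<Omega>"
    moreover have "\<forall>i j. A x $ i $ j = cnj (A x $ j $ i)" using A_herm \<open>x \<in> \<Omega>\<close> by blast
    ultimately show "ellmat (A x) \<alpha>" using \<alpha> by (intro ellmat.intro)
  qed
  have meas_L2: "g \<in> borel_measurable ?M" if "L2 \<Omega> g" for g :: "real^'d \<Rightarrow> complex^'d"
    using that unfolding L2_def by simp
  have iQinv: "integrable ?M (\<lambda>x. cinner (?Ai x *v v x) (v x))" if vL: "L2 \<Omega> v" for v
  proof (rule Bochner_Integration.integrable_bound[where f = "\<lambda>x. (norm (v x))\<^sup>2 / \<alpha>"])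
    show "integrable ?M (\<lambda>x. (norm (v x))\<^sup>2 / \<alpha>)" using vL unfolding L2_def by simp
    show "(\<lambda>x. cinner (?Ai x *v v x) (v x)) \<in> borel_measurable ?M"
      by (intro meas_cinner meas_mv Aim meas_L2 vL)
    show "AE x in ?M. norm (cinner (?Ai x *v v x) (v x)) \<le> norm ((norm (v x))\<^sup>2 / \<alpha>)"
      using EM
    proof eventually_elim
      case (elim x)
      have "norm (cinner (?Ai x *v v x) (v x)) \<le> (norm (v x))\<^sup>2 / \<alpha>" by (rule ellmat.Q_bound[OF elim])
      thus ?case using \<alpha> by simp
    qed
  qed
  have iQe: "integrable ?M (\<lambda>x. cinner (?Ai x *v ?e x) (?e x))" by (rule iQinv[OF eL])
  have iQd: "integrable ?M (\<lambda>x. cinner (?Ai x *v ?d x) (?d x))" by (rule iQinv[OF dL])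
  have iQg: "integrable ?M (\<lambda>x. cinner (A x *v ?gw x) (?gw x))" by (rule int_cinner[OF AgwL gwL])
  have iX: "integrable ?M (\<lambda>x. cinner (?d x) (?gw x))" by (rule int_cinner[OF dL gwL])
  define Qe where "Qe = wnorm2 \<Omega> ?Ai ?e"
  define Qg where "Qg = wnorm2 \<Omega> A ?gw"
  define Qd where "Qd = wnorm2 \<Omega> ?Ai ?d"
  define R where "R = (L2norm \<Omega> ?r)\<^sup>2"
  define DD where "DD = (L2norm \<Omega> ?dd)\<^sup>2"
  have Qe_eq: "Qe = (LINT x|?M. Re (cinner (?Ai x *v ?e x) (?e x)))"
    unfolding Qe_def wnorm2_def L2inner_def by (rule integral_Re[OF iQe, symmetric])
  have Qg_eq: "Qg = (LINT x|?M. Re (cinner (A x *v ?gw x) (?gw x)))"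
    unfolding Qg_def wnorm2_def L2inner_def by (rule integral_Re[OF iQg, symmetric])
  have Qd_eq: "Qd = (LINT x|?M. Re (cinner (?Ai x *v ?d x) (?d x)))"
    unfolding Qd_def wnorm2_def L2inner_def by (rule integral_Re[OF iQd, symmetric])
  have Qd_nonneg: "0 \<le> Qd" unfolding Qd_eq
    using EM by (intro integral_nonneg_AE) (auto elim: eventually_mono intro: ellmat.Q_nonneg)
  have e_eq: "AE x in ?M. ?e x = A x *v ?gw x - ?d x"
    using p_eq by eventually_elim (simp add: matrix_vector_mult_diff_distrib)
  have dd_eq: "AE x in ?M. ?dd x = - ?r x"
    using div_eq
  proof eventually_elim
    case (elim x)
    hence "f x = - dp x" by simp
    thus ?case by simp
  qed
  have DD_R: "DD = R"
    unfolding DD_def R_def L2norm_sq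
  proof (rule integral_cong_AE)
    show "(\<lambda>x. (norm (?dd x))\<^sup>2) \<in> borel_measurable ?M" using ddL unfolding L2_def by (blast intro: borel_measurable_integrable)
    show "(\<lambda>x. (norm (?r x))\<^sup>2) \<in> borel_measurable ?M" using rL unfolding L2_def by (blast intro: borel_measurable_integrable)
    show "AE x in ?M. (norm (?dd x))\<^sup>2 = (norm (?r x))\<^sup>2" using dd_eq
      by eventually_elim (simp only: norm_minus_cancel)
  qed
  have DD_nonneg: "0 \<le> DD" unfolding DD_def by simp
  have low: "Qe \<le> 2 * Qg + 2 * Qd"
  proof -
    have "Qe \<le> (LINT x|?M. 2 * Re (cinner (A x *v ?gw x) (?gw x)) + 2 * Re (cinner (?Ai x *v ?d x) (?d x)))"
      unfolding Qe_eq
    proof (rule integral_mono_AE)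
      show "integrable ?M (\<lambda>x. Re (cinner (?Ai x *v ?e x) (?e x)))" by (rule integrable_Re[OF iQe])
      show "integrable ?M (\<lambda>x. 2 * Re (cinner (A x *v ?gw x) (?gw x)) + 2 * Re (cinner (?Ai x *v ?d x) (?d x)))"
        by (intro Bochner_Integration.integrable_add integrable_mult_right integrable_Re iQg iQd)
      show "AE x in ?M. Re (cinner (?Ai x *v ?e x) (?e x)) \<le> 2 * Re (cinner (A x *v ?gw x) (?gw x)) + 2 * Re (cinner (?Ai x *v ?d x) (?d x))"
        using EM e_eq
      proof eventually_elim
        case (elim x)
        have "Re (cinner (?Ai x *v ?e x) (?e x)) = Re (cinner (?Ai x *v (A x *v ?gw x - ?d x)) (A x *v ?gw x - ?d x))"
          by (simp only: elim(2))
        also have "\<dots> \<le> 2 * Re (cinner (?Ai x *v (A x *v ?gw x)) (A x *v ?gw x)) + 2 * Re (cinner (?Ai x *v ?d x) (?d x))"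
          by (rule ellmat.Q_para[OF elim(1)])
        also have "Re (cinner (?Ai x *v (A x *v ?gw x)) (A x *v ?gw x)) = Re (cinner (A x *v ?gw x) (?gw x))"
          by (rule ellmat.Q_AB[OF elim(1)])
        finally show ?case .
      qed
    qed
    also have "\<dots> = 2 * Qg + 2 * Qd"
      unfolding Qg_eq Qd_eq
      by (subst Bochner_Integration.integral_add) (auto intro!: integrable_mult_right integrable_Re iQg iQd)
    finally show ?thesis .
  qed
  define I where "I = (LINT x|?M. cinner (?d x) (?gw x))"
  have ident: "Qe = Qg + Qd - 2 * Re I"
  proof -
    have "Qe = (LINT x|?M. Re (cinner (A x *v ?gw x) (?gw x)) + Re (cinner (?Ai x *v ?d x) (?d x)) - 2 * Re (cinner (?d x) (?gw x)))"
      unfolding Qe_eq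
    proof (rule integral_cong_AE)
      show "(\<lambda>x. Re (cinner (?Ai x *v ?e x) (?e x))) \<in> borel_measurable ?M"
        using integrable_Re[OF iQe] by (rule borel_measurable_integrable)
      show "(\<lambda>x. Re (cinner (A x *v ?gw x) (?gw x)) + Re (cinner (?Ai x *v ?d x) (?d x)) - 2 * Re (cinner (?d x) (?gw x))) \<in> borel_measurable ?M"
        by (intro borel_measurable_integrable Bochner_Integration.integrable_diff Bochner_Integration.integrable_add
            integrable_mult_right integrable_Re iQg iQd iX)
      show "AE x in ?M. Re (cinner (?Ai x *v ?e x) (?e x)) = Re (cinner (A x *v ?gw x) (?gw x)) + Re (cinner (?Ai x *v ?d x) (?d x)) - 2 * Re (cinner (?d x) (?gw x))"
        using EM e_eq
      proof eventually_elim
        case (elim x)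
        have "Re (cinner (?Ai x *v ?e x) (?e x)) = Re (cinner (?Ai x *v (A x *v ?gw x - ?d x)) (A x *v ?gw x - ?d x))"
          by (simp only: elim(2))
        also have "\<dots> = Re (cinner (A x *v ?gw x) (?gw x)) + Re (cinner (?Ai x *v ?d x) (?d x)) - 2 * Re (cinner (?d x) (?gw x))"
          by (rule ellmat.Q_ident[OF elim(1)])
        finally show ?case .
      qed
    qed
    also have "\<dots> = Qg + Qd - 2 * (LINT x|?M. Re (cinner (?d x) (?gw x)))"
    proof -
      have iA: "integrable ?M (\<lambda>x. Re (cinner (A x *v ?gw x) (?gw x)))" by (rule integrable_Re[OF iQg])
      have iB: "integrable ?M (\<lambda>x. Re (cinner (?Ai x *v ?d x) (?d x)))" by (rule integrable_Re[OF iQd])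
      have iC: "integrable ?M (\<lambda>x. Re (cinner (?d x) (?gw x)))" by (rule integrable_Re[OF iX])
      have "(LINT x|?M. Re (cinner (A x *v ?gw x) (?gw x)) + Re (cinner (?Ai x *v ?d x) (?d x)) - 2 * Re (cinner (?d x) (?gw x)))
          = (LINT x|?M. Re (cinner (A x *v ?gw x) (?gw x)) + Re (cinner (?Ai x *v ?d x) (?d x))) - (LINT x|?M. 2 * Re (cinner (?d x) (?gw x)))"
        by (rule Bochner_Integration.integral_diff[OF Bochner_Integration.integrable_add[OF iA iB] integrable_mult_right[OF iC]])
      also have "(LINT x|?M. Re (cinner (A x *v ?gw x) (?gw x)) + Re (cinner (?Ai x *v ?d x) (?d x)))
          = (LINT x|?M. Re (cinner (A x *v ?gw x) (?gw x))) + (LINT x|?M. Re (cinner (?Ai x *v ?d x) (?d x)))"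
        by (rule Bochner_Integration.integral_add[OF iA iB])
      also have "(LINT x|?M. 2 * Re (cinner (?d x) (?gw x))) = 2 * (LINT x|?M. Re (cinner (?d x) (?gw x)))"
        by (rule integral_mult_right_zero)
      finally show ?thesis unfolding Qg_eq Qd_eq .
    qed
    also have "(LINT x|?M. Re (cinner (?d x) (?gw x))) = Re I"
      unfolding I_def by (rule integral_Re[OF iX])
    finally show ?thesis .
  qed
  have I_eq: "I = (LINT x|?M. ?r x * cnj (?w x))"
  proof -
    have "I = - (LINT x|?M. ?dd x * cnj (?w x))" unfolding I_def by (rule IBP[OF \<Omega> Hw Hd])
    also have "(LINT x|?M. ?dd x * cnj (?w x)) = (LINT x|?M. - (?r x * cnj (?w x)))"
    proof (rule integral_cong_AE)
      show "(\<lambda>x. ?dd x * cnj (?w x)) \<in> borel_measurable ?M"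
        by (rule borel_measurable_integrable[OF int_mult_cnj[OF ddL wL]])
      show "(\<lambda>x. - (?r x * cnj (?w x))) \<in> borel_measurable ?M"
        by (rule borel_measurable_integrable[OF integrable_minus[OF int_mult_cnj[OF rL wL]]])
      show "AE x in ?M. ?dd x * cnj (?w x) = - (?r x * cnj (?w x))" using dd_eq
        by eventually_elim (simp only: mult_minus_left)
    qed
    finally show ?thesis by simp
  qed
  have rho0: "0 \<le> L2norm \<Omega> ?r" by (rule L2norm_nonneg)
  have G0: "0 \<le> L2norm \<Omega> ?gw" by (rule L2norm_nonneg)
  have ReI: "Re I \<le> L2norm \<Omega> ?r * (C\<^sub>F * L2norm \<Omega> ?gw)"
  proof -
    have "Re I \<le> norm I" by (rule complex_Re_le_cmod)
    also have "\<dots> \<le> L2norm \<Omega> ?r * L2norm \<Omega> ?w" unfolding I_eq by (rule CS_mult[OF rL wL])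
    also have "\<dots> \<le> L2norm \<Omega> ?r * (C\<^sub>F * L2norm \<Omega> ?gw)"
      using friedrichs Hw rho0 by (intro mult_left_mono) auto
    finally show ?thesis .
  qed
  have ellG: "\<alpha> * (L2norm \<Omega> ?gw)\<^sup>2 \<le> Qg"
    using A_ell gwL unfolding Qg_def wnorm2_def by blast
  have young: "2 * (L2norm \<Omega> ?r * C\<^sub>F) * L2norm \<Omega> ?gw \<le> 2 * C\<^sub>F\<^sup>2 * R / \<alpha> + \<alpha> * (L2norm \<Omega> ?gw)\<^sup>2 / 2"
  proof -
    have "(L2norm \<Omega> ?r * C\<^sub>F) * L2norm \<Omega> ?gw \<le> ((2 / \<alpha>) * (L2norm \<Omega> ?r * C\<^sub>F)\<^sup>2 + (L2norm \<Omega> ?gw)\<^sup>2 / (2 / \<alpha>)) / 2"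
      by (rule young_real) (use \<alpha> in simp)
    also have "\<dots> = C\<^sub>F\<^sup>2 * R / \<alpha> + \<alpha> * (L2norm \<Omega> ?gw)\<^sup>2 / 4"
      unfolding R_def using \<alpha> by (simp add: field_simps power_mult_distrib)
    finally show ?thesis by (simp add: field_simps)
  qed
  have upper_core: "Qg + 2 * Qd \<le> 2 * Qe + 4 * (C\<^sub>F\<^sup>2 * R / \<alpha>)"
  proof -
    have "Qg + Qd = Qe + 2 * Re I" using ident by simp
    also have "\<dots> \<le> Qe + 2 * (L2norm \<Omega> ?r * (C\<^sub>F * L2norm \<Omega> ?gw))" using ReI by simp
    also have "2 * (L2norm \<Omega> ?r * (C\<^sub>F * L2norm \<Omega> ?gw)) \<le> 2 * C\<^sub>F\<^sup>2 * R / \<alpha> + \<alpha> * (L2norm \<Omega> ?gw)\<^sup>2 / 2"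
      using young by (simp add: mult_ac)
    finally have "Qg + Qd \<le> Qe + 2 * C\<^sub>F\<^sup>2 * R / \<alpha> + \<alpha> * (L2norm \<Omega> ?gw)\<^sup>2 / 2" by simp
    hence "2 * Qg + 2 * Qd \<le> 2 * Qe + 4 * (C\<^sub>F\<^sup>2 * R / \<alpha>) + \<alpha> * (L2norm \<Omega> ?gw)\<^sup>2"
      by (simp add: field_simps)
    thus ?thesis using ellG by simp
  qed
  have coef: "(1 + 4 * C\<^sub>F\<^sup>2 / \<alpha>) * R = R + 4 * (C\<^sub>F\<^sup>2 * R / \<alpha>)"
    by (simp add: field_simps)
  have part1: "(1/2) * Qe + R \<le> Qg + Qd + DD" using low DD_R by simp
  have part2: "Qg + Qd + DD \<le> 2 * Qe + (1 + 4 * C\<^sub>F\<^sup>2 / \<alpha>) * R"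
    unfolding coef using upper_core Qd_nonneg DD_R by simp
  show ?thesis using part1 part2 unfolding Qe_def Qg_def Qd_def R_def DD_def by simp
qed

end
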